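(* Let $p$ be a prime, $C\subseteq\mathbb{F}_p^{2n}$ a symplectic self-orthogonal code with stabilizer code $Q(C)\subseteq\mathbb{C}^{p^n}$, and let $\emptyset\neq I\subsetneq J\subsetneq\{1,\dots,n\}$. If \[\sigma_I\left[\pi_J\left(C^{\perp_s}\right)\right]=\sigma_I(C),\] then $Q(C)$ is $(I,J)$-locally recoverable.
   Context: Vectors of $\mathbb{F}_p^{2n}$ are written $(\mathbf a|\mathbf b)$, $\mathbf a,\mathbf b\in\mathbb F_p^n$, coordinate pair $(a_j,b_j)$ indexed by $j\in\{1,\dots,n\}$. Symplectic form: $(\mathbf a|\mathbf b)\cdot_s(\mathbf c|\mathbf d)=\mathbf a\cdot\mathbf d-\mathbf b\cdot\mathbf c$; $C^{\perp_s}$ is the dual; $C$ is symplectic self-orthogonal if $C\subseteq C^{\perp_s}$. For $R\subseteq\{1,\dots,n\}$: $\pi_R(\mathbf a|\mathbf b)=(a_j|b_j)_{j\in R}$, puncturing $\pi_R(D)=\{\pi_R(\mathbf y):\mathbf y\in D\}$, shortening $\sigma_R(D)=\{\pi_R(\mathbf y):\mathbf y=(\mathbf a|\mathbf b)\in D,\ \mathrm{supp}(\mathbf a)\cup\mathrm{supp}(\mathbf b)\subseteq R\}$; for $I\subseteq J$ the shortening at $I$ of a code in $\mathbb F_p^{2|J|}$ (pairs indexed by $J$) is defined the same way. Quantum setting: $\xi=e^{2\pi\iota/p}$, $X(a)|x\rangle=|x+a\rangle$, $Z(b)|x\rangle=\xi^{bx}|x\rangle$ on $\mathbb C^p$, $E_{(\mathbf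 a,\mathbf b)}=\bigotimes_jX(a_j)Z(b_j)$. $Q(C)$ is the common eigenspace $\{v:Ev=\lambda(E)v\ \forall E\in S\}$, $S$ the commutative group generated by scalars $\xi^\ell\mathcal I$ and $E_{\mathbf y}$, $\mathbf y\in C$, $\lambda$ a character of $S$ with $\lambda(\xi\mathcal I)=\xi$. Let $\Gamma(\rho)=p^{-2}\sum_{a,b}X(a)Z(b)\rho (X(a)Z(b))^\dagger$, and $\Gamma^I$ apply $\Gamma$ to the qudits indexed by $I$ and the identity elsewhere. For $\emptyset\ne I\subsetneq J$, a code $Q$ is $(I,J)$-locally recoverable if there is a trace-preserving quantum operation $\mathcal R$ acting only on the qudits indexed by $J$ (identity on the others) with $\mathcal R\circ\Gamma^I(|\varphi\rangle\langle\varphi|)=|\varphi\rangle\langle\varphi|$ for all $|\varphi\rangle\in Q$. *)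

theory Defs
  imports Complex_Main "HOL-Computational_Algebra.Primes"
begin

text \<open>A vector of F_p^K (K a finite set of coordinates) is a function nat => nat with
  values in {0..p-1} on K and 0 outside K.  A vector of F_p^{2|K|} is a pair (a,b).\<close>

definition fvec :: "nat \<Rightarrow> nat set \<Rightarrow> (nat \<Rightarrow> nat) set" where
  "fvec p K = {x. (\<forall>j\<in>K. x j < p) \<and> (\<forall>j. j \<notin> K \<longrightarrow> x j = 0)}"

type_synonym svec = "(nat \<Rightarrow> nat) \<times> (nat \<Rightarrow> nat)"

definition svecs :: "nat \<Rightarrow> nat set \<Rightarrow> svec set" where
  "svecs p K = fvec p K \<times> fvec p K"

definition sadd :: "nat \<Rightarrow> svec \<Rightarrow> svec \<Rightarrow> svec" where
  "sadd p u v = ((\<lambda>j. (fst u j + fst v j) mod p), (\<lambda>j. (snd u j + snd v j) mod p))"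

definition ssmul :: "nat \<Rightarrow> nat \<Rightarrow> svec \<Rightarrow> svec" where
  "ssmul p c u = ((\<lambda>j. (c * fst u j) mod p), (\<lambda>j. (c * snd u j) mod p))"

definition is_code :: "nat \<Rightarrow> nat \<Rightarrow> svec set \<Rightarrow> bool" where
  "is_code p n C \<longleftrightarrow> C \<subseteq> svecs p {1..n} \<and> ((\<lambda>_. 0), (\<lambda>_. 0)) \<in> C \<and>
     (\<forall>u\<in>C. \<forall>v\<in>C. sadd p u v \<in> C) \<and> (\<forall>c<p. \<forall>u\<in>C. ssmul p c u \<in> C)"

definition symp :: "nat \<Rightarrow> nat \<Rightarrow> svec \<Rightarrow> svec \<Rightarrow> int" where
  "symp p n u v = (\<Sum>j\<in>{1..n}. int (fst u j) * int (snd v j) - int (snd u j) * int (fst v j)) mod int p"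

definition sdual :: "nat \<Rightarrow> nat \<Rightarrow> svec set \<Rightarrow> svec set" where
  "sdual p n C = {y \<in> svecs p {1..n}. \<forall>c\<in>C. symp p n y c = 0}"

definition symp_self_orth :: "nat \<Rightarrow> nat \<Rightarrow> svec set \<Rightarrow> bool" where
  "symp_self_orth p n C \<longleftrightarrow> is_code p n C \<and> C \<subseteq> sdual p n C"

text \<open>pi_R: keep coordinate pairs indexed by R (others set to 0, i.e. dropped).\<close>
definition proj :: "nat set \<Rightarrow> svec \<Rightarrow> svec" where
  "proj R y = ((\<lambda>j. if j \<in> R then fst y j else 0), (\<lambda>j. if j \<in> R then snd y j else 0))"

definition puncture :: "nat set \<Rightarrow> svec set \<Rightarrow> svec set" where
  "puncture R D = proj R ` D"

definition shorten :: "nat set \<Rightarrow> svec set \<Rightarrow> svec set" where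
  "shorten R D = {proj R y | y. y \<in> D \<and> (\<forall>j. j \<notin> R \<longrightarrow> fst y j = 0 \<and> snd y j = 0)}"

text \<open>Computational basis of (C^p)^{\<otimes>K}: the vectors fvec p K.  States are functions
  on basis labels (values outside the basis are irrelevant); operators are matrices
  indexed by basis labels (entries outside the basis are 0 for the operators below).\<close>

type_synonym cmat = "(nat \<Rightarrow> nat) \<Rightarrow> (nat \<Rightarrow> nat) \<Rightarrow> complex"

definition xi :: "nat \<Rightarrow> complex" where
  "xi p = cis (2 * pi / real p)"

definition mmul :: "(nat \<Rightarrow> nat) set \<Rightarrow> cmat \<Rightarrow> cmat \<Rightarrow> cmat" where
  "mmul B X Y = (\<lambda>x y. \<Sum>z\<in>B. X x z * Y z y)"

definition madj :: "cmat \<Rightarrow> cmat" where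
  "madj X = (\<lambda>x y. cnj (X y x))"

definition ident :: "(nat \<Rightarrow> nat) set \<Rightarrow> cmat" where
  "ident B = (\<lambda>x y. if x \<in> B \<and> y \<in> B \<and> x = y then 1 else 0)"

definition mvec :: "(nat \<Rightarrow> nat) set \<Rightarrow> cmat \<Rightarrow> ((nat \<Rightarrow> nat) \<Rightarrow> complex) \<Rightarrow> ((nat \<Rightarrow> nat) \<Rightarrow> complex)" where
  "mvec B X v = (\<lambda>x. \<Sum>y\<in>B. X x y * v y)"

definition mat_eq :: "(nat \<Rightarrow> nat) set \<Rightarrow> cmat \<Rightarrow> cmat \<Rightarrow> bool" where
  "mat_eq B X Y \<longleftrightarrow> (\<forall>x\<in>B. \<forall>y\<in>B. X x y = Y x y)"

text \<open>E_(a,b) = tensor_j X(a_j) Z(b_j) on n qudits:  E |x> = xi^(b.x) |x + a>.\<close>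
definition pauli :: "nat \<Rightarrow> nat \<Rightarrow> svec \<Rightarrow> cmat" where
  "pauli p n y = (\<lambda>z x. if z \<in> fvec p {1..n} \<and> x \<in> fvec p {1..n} \<and>
        z = (\<lambda>j. (x j + fst y j) mod p)
      then xi p ^ (\<Sum>j\<in>{1..n}. snd y j * x j) else 0)"

text \<open>The stabilizer group S: generated by the scalars xi^l I and E_y, y in C
  (closure under products; S is finite, so this is the generated group).\<close>
inductive_set stab_group :: "nat \<Rightarrow> nat \<Rightarrow> svec set \<Rightarrow> cmat set"
  for p :: nat and n :: nat and C :: "svec set" where
  scalar: "(\<lambda>x y. xi p ^ l * ident (fvec p {1..n}) x y) \<in> stab_group p n C"
| gen: "y \<in> C \<Longrightarrow> pauli p n y \<in> stab_group p n C"
| mult: "A \<in> stab_group p n C \<Longrightarrow> B \<in> stab_group p n C \<Longrightarrow>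
         mmul (fvec p {1..n}) A B \<in> stab_group p n C"

definition is_character :: "nat \<Rightarrow> nat \<Rightarrow> svec set \<Rightarrow> (cmat \<Rightarrow> complex) \<Rightarrow> bool" where
  "is_character p n C lam \<longleftrightarrow>
     (\<forall>A\<in>stab_group p n C. \<forall>B\<in>stab_group p n C.
        lam (mmul (fvec p {1..n}) A B) = lam A * lam B) \<and>
     (\<forall>A\<in>stab_group p n C. lam A \<noteq> 0) \<and>
     lam (\<lambda>x y. xi p * ident (fvec p {1..n}) x y) = xi p"

definition stab_code :: "nat \<Rightarrow> nat \<Rightarrow> svec set \<Rightarrow> (cmat \<Rightarrow> complex) \<Rightarrow> ((nat \<Rightarrow> nat) \<Rightarrow> complex) set" where
  "stab_code p n C lam = {v. \<forall>E\<in>stab_group p n C. \<forall>x\<in>fvec p {1..n}.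
       mvec (fvec p {1..n}) E v x = lam E * v x}"

definition ketbra :: "((nat \<Rightarrow> nat) \<Rightarrow> complex) \<Rightarrow> cmat" where
  "ketbra v = (\<lambda>x y. v x * cnj (v y))"

text \<open>Gamma^I = (tensor over j in I of Gamma) tensor id, written out:
  p^(-2|I|) * sum over (a,b) supported on I of E_(a,b) rho E_(a,b)^dagger.\<close>
definition gammaI :: "nat \<Rightarrow> nat \<Rightarrow> nat set \<Rightarrow> cmat \<Rightarrow> cmat" where
  "gammaI p n I rho = (\<lambda>x y. (1 / of_nat p ^ (2 * card I)) *
     (\<Sum>e\<in>svecs p I. mmul (fvec p {1..n})
        (mmul (fvec p {1..n}) (pauli p n e) rho) (madj (pauli p n e)) x y))"

definition restr :: "nat set \<Rightarrow> (nat \<Rightarrow> nat) \<Rightarrow> (nat \<Rightarrow> nat)" where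
  "restr J x = (\<lambda>j. if j \<in> J then x j else 0)"

text \<open>A \<otimes> I_{complement of J}, for A an operator on the qudits indexed by J.\<close>
definition local_op :: "nat \<Rightarrow> nat \<Rightarrow> nat set \<Rightarrow> cmat \<Rightarrow> cmat" where
  "local_op p n J A = (\<lambda>x y. if x \<in> fvec p {1..n} \<and> y \<in> fvec p {1..n} \<and>
       (\<forall>j. j \<notin> J \<longrightarrow> x j = y j) then A (restr J x) (restr J y) else 0)"

text \<open>Trace-preserving quantum operation on the qudits J (identity elsewhere), in
  Kraus (operator-sum) form: R(rho) = sum_k (A_k \<otimes> I) rho (A_k \<otimes> I)^dagger with
  sum_k A_k^dagger A_k = I.\<close>
definition kraus_TP :: "nat \<Rightarrow> nat set \<Rightarrow> cmat list \<Rightarrow> bool" where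
  "kraus_TP p J As \<longleftrightarrow> mat_eq (fvec p J)
     (\<lambda>x y. \<Sum>k<length As. mmul (fvec p J) (madj (As ! k)) (As ! k) x y) (ident (fvec p J))"

definition apply_local_kraus :: "nat \<Rightarrow> nat \<Rightarrow> nat set \<Rightarrow> cmat list \<Rightarrow> cmat \<Rightarrow> cmat" where
  "apply_local_kraus p n J As rho = (\<lambda>x y. \<Sum>k<length As.
     mmul (fvec p {1..n}) (mmul (fvec p {1..n}) (local_op p n J (As ! k)) rho)
       (madj (local_op p n J (As ! k))) x y)"

definition locally_recoverable ::
  "nat \<Rightarrow> nat \<Rightarrow> nat set \<Rightarrow> nat set \<Rightarrow> ((nat \<Rightarrow> nat) \<Rightarrow> complex) set \<Rightarrow> bool" where
  "locally_recoverable p n I J Q \<longleftrightarrow> I \<noteq> {} \<and> I \<subset> J \<and>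
     (\<exists>As. kraus_TP p J As \<and>
        (\<forall>v\<in>Q. mat_eq (fvec p {1..n})
           (apply_local_kraus p n J As (gammaI p n I (ketbra v))) (ketbra v)))"

end

theory Submission
  imports Defs "HOL-Library.FuncSet" "HOL-Number_Theory.Cong"
begin

definition om :: "nat \<Rightarrow> int \<Rightarrow> complex" where
  "om p k = cis (2 * pi * of_int k / real p)"

lemma om_add: "om p (a + b) = om p a * om p b"
  unfolding om_def by (simp add: cis_mult add_divide_distrib distrib_left)

lemma om_0[simp]: "om p 0 = 1"
  unfolding om_def by simp

lemma om_mult_p: assumes "p > 0" shows "om p (int p * m) = 1"
proof -
  have "2 * pi * of_int (int p * m) / real p = 2 * pi * of_int m"
    using assms by (simp add: field_simps)
  then show ?thesis unfolding om_def by (simp add: cis_multiple_2pi)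
qed

lemma om_mod: assumes "p > 0" shows "om p (k mod int p) = om p k"
proof -
  have "k = k mod int p + int p * (k div int p)" by simp
  then have "om p k = om p (k mod int p) * om p (int p * (k div int p))"
    by (metis om_add)
  then show ?thesis using om_mult_p[OF assms] by simp
qed

lemma om_cong: assumes "p > 0" "[a = b] (mod int p)" shows "om p a = om p b"
  using assms om_mod[OF assms(1)] unfolding cong_def by metis

lemma om_norm[simp]: "norm (om p k) = 1"
  unfolding om_def by simp

lemma om_cnj: "cnj (om p k) = om p (- k)"
  unfolding om_def by (simp add: cis_cnj)

lemma om_cnj_mult[simp]: "cnj (om p k) * om p k = 1"
  by (metis om_add om_cnj om_0 add.left_inverse)

lemma om_eq_1: assumes "p > 0" shows "om p k = 1 \<longleftrightarrow> int p dvd k"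
proof
  assume "int p dvd k" then obtain m where "k = int p * m" by (auto simp: dvd_def)
  then show "om p k = 1" using om_mult_p[OF assms] by simp
next
  assume h: "om p k = 1"
  then have "cos (2 * pi * of_int k / real p) = 1"
    unfolding om_def by (metis Re_complex_of_real complex_of_real_def cis.sel(1) one_complex.sel(1))
  then obtain m :: int where m: "2 * pi * of_int k / real p = of_int m * 2 * pi"
    using cos_one_2pi_int by blast
  then have "real_of_int k = real_of_int m * real p" using assms by (simp add: field_simps)
  then have "k = m * int p" by (metis of_int_eq_iff of_int_mult of_int_of_nat_eq)
  then show "int p dvd k" by simp
qed

lemma xi_pow: "xi p ^ m = om p (int m)"
  unfolding xi_def om_def by (simp add: DeMoivre algebra_simps)

definition ext0 :: "nat set \<Rightarrow> (nat \<Rightarrow> nat) \<Rightarrow> (nat \<Rightarrow> nat)" where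
  "ext0 K f = (\<lambda>j. if j \<in> K then f j else 0)"

lemma fvec_eq: "fvec p K = ext0 K ` (PiE K (\<lambda>_. {..<p}))"
proof
  show "fvec p K \<subseteq> ext0 K ` (PiE K (\<lambda>_. {..<p}))"
  proof
    fix x assume x: "x \<in> fvec p K"
    have "x = ext0 K (restrict x K)" using x unfolding fvec_def ext0_def by auto
    moreover have "restrict x K \<in> PiE K (\<lambda>_. {..<p})" using x unfolding fvec_def by auto
    ultimately show "x \<in> ext0 K ` (PiE K (\<lambda>_. {..<p}))" by blast
  qed
  show "ext0 K ` (PiE K (\<lambda>_. {..<p})) \<subseteq> fvec p K"
    unfolding fvec_def ext0_def by (auto simp: PiE_def Pi_def)
qed

lemma inj_ext0: "inj_on (ext0 K) (PiE K (\<lambda>_. {..<p}))"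
proof (rule inj_onI)
  fix f g assume f: "f \<in> PiE K (\<lambda>_. {..<p})" and g: "g \<in> PiE K (\<lambda>_. {..<p})"
    and e: "ext0 K f = ext0 K g"
  show "f = g"
  proof (rule PiE_ext[OF f g])
    fix j assume "j \<in> K" then show "f j = g j" using fun_cong[OF e, of j] by (simp add: ext0_def)
  qed
qed

lemma card_fvec: "finite K \<Longrightarrow> card (fvec p K) = p ^ card K"
  unfolding fvec_eq by (simp add: card_image[OF inj_ext0] card_PiE)

lemma finite_fvec: "finite K \<Longrightarrow> finite (fvec p K)"
  unfolding fvec_eq by (simp add: finite_PiE)

lemma card_svecs: "finite K \<Longrightarrow> card (svecs p K) = p ^ (2 * card K)"
  unfolding svecs_def by (simp add: card_cartesian_product card_fvec power_mult power2_eq_square power_mult_distrib)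

lemma finite_svecs: "finite K \<Longrightarrow> finite (svecs p K)"
  unfolding svecs_def by (simp add: finite_fvec)

lemma svecs_ne: "p > 0 \<Longrightarrow> ((\<lambda>_. 0), (\<lambda>_. 0)) \<in> svecs p K"
  unfolding svecs_def fvec_def by auto

lemma sadd_svecs: "u \<in> svecs p K \<Longrightarrow> v \<in> svecs p K \<Longrightarrow> p > 0 \<Longrightarrow> sadd p u v \<in> svecs p K"
  unfolding svecs_def fvec_def sadd_def by auto

lemma inj_sadd: assumes "p > 0" shows "inj_on (sadd p g) (svecs p K)"
proof (rule inj_onI)
  fix u v assume u: "u \<in> svecs p K" and v: "v \<in> svecs p K" and e: "sadd p g u = sadd p g v"
  have a: "fst u j = fst v j" for j
  proof (cases "j \<in> K")
    case True
    have "(fst g j + fst u j) mod p = (fst g j + fst v j) mod p"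
      using arg_cong[OF e, of "\<lambda>x. fst x j"] unfolding sadd_def by simp
    then have "fst u j mod p = fst v j mod p" by (metis cong_add_lcancel_nat cong_def)
    then show ?thesis using True u v unfolding svecs_def fvec_def by auto
  next
    case False then show ?thesis using u v unfolding svecs_def fvec_def by auto
  qed
  have b: "snd u j = snd v j" for j
  proof (cases "j \<in> K")
    case True
    have "(snd g j + snd u j) mod p = (snd g j + snd v j) mod p"
      using arg_cong[OF e, of "\<lambda>x. snd x j"] unfolding sadd_def by simp
    then have "snd u j mod p = snd v j mod p" by (metis cong_add_lcancel_nat cong_def)
    then show ?thesis using True u v unfolding svecs_def fvec_def by auto
  next
    case False then show ?thesis using u v unfolding svecs_def fvec_def by auto
  qed
  show "u = v" using a b by (simp add: prod_eq_iff fun_eq_iff)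
qed

lemma char_sum:
  assumes p: "p > 0" and fin: "finite G" and sub: "G \<subseteq> svecs p K"
    and cl: "\<forall>u\<in>G. \<forall>v\<in>G. sadd p u v \<in> G"
    and add: "\<forall>u\<in>G. \<forall>v\<in>G. [f (sadd p u v) = f u + f v] (mod int p)"
  shows "(\<Sum>g\<in>G. om p (f g)) = (if \<forall>g\<in>G. int p dvd f g then of_nat (card G) else 0)"
proof (cases "\<forall>g\<in>G. int p dvd f g")
  case True
  then have "\<forall>g\<in>G. om p (f g) = 1" using om_eq_1[OF p] by blast
  then show ?thesis using True by simp
next
  case False
  then obtain g0 where g0: "g0 \<in> G" "\<not> int p dvd f g0" by blast
  have inj: "inj_on (sadd p g0) G" using inj_on_subset[OF inj_sadd[OF p] sub] .
  have im: "sadd p g0 ` G = G"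
  proof (rule card_subset_eq[OF fin])
    show "sadd p g0 ` G \<subseteq> G" using cl g0 by auto
    show "card (sadd p g0 ` G) = card G" using card_image[OF inj] .
  qed
  have "(\<Sum>g\<in>G. om p (f g)) = (\<Sum>g\<in>sadd p g0 ` G. om p (f g))" using im by simp
  also have "\<dots> = (\<Sum>g\<in>G. om p (f (sadd p g0 g)))" using sum.reindex[OF inj] by simp
  also have "\<dots> = (\<Sum>g\<in>G. om p (f g0) * om p (f g))"
    using add g0 om_cong[OF p] by (intro sum.cong) (auto simp: om_add[symmetric])
  also have "\<dots> = om p (f g0) * (\<Sum>g\<in>G. om p (f g))" by (simp add: sum_distrib_left)
  finally have "(1 - om p (f g0)) * (\<Sum>g\<in>G. om p (f g)) = 0" by (simp add: algebra_simps)
  moreover have "om p (f g0) \<noteq> 1" using om_eq_1[OF p] g0 by blast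
  ultimately have "(\<Sum>g\<in>G. om p (f g)) = 0" by simp
  then show ?thesis using False by (simp only: if_False)
qed

lemma sum_single:
  assumes "finite B" "z0 \<in> B" "\<And>z. z \<in> B \<Longrightarrow> z \<noteq> z0 \<Longrightarrow> f z = 0"
  shows "sum f B = f z0"
proof -
  have "sum f B = f z0 + sum f (B - {z0})" using assms by (simp add: sum.remove)
  also have "sum f (B - {z0}) = 0" using assms by (intro sum.neutral) auto
  finally show ?thesis by simp
qed

definition bf :: "nat set \<Rightarrow> svec \<Rightarrow> svec \<Rightarrow> int" where
  "bf K u v = (\<Sum>j\<in>K. int (fst u j) * int (snd v j) - int (snd u j) * int (fst v j))"

lemma symp_bf: "symp p n u v = bf {1..n} u v mod int p"
  unfolding symp_def bf_def ..

lemma cong_nat_mod_lt: "(a::nat) < p \<Longrightarrow> b < p \<Longrightarrow> int p dvd (int a - int b) \<Longrightarrow> a = b"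
proof -
  assume a: "a < p" "b < p" "int p dvd (int a - int b)"
  have "int a mod int p = int b mod int p" by (subst mod_eq_dvd_iff) (rule a(3))
  moreover have "int a mod int p = int a" "int b mod int p = int b" using a by simp_all
  ultimately show "a = b" by simp
qed

lemma cmod1: "[int ((a + b) mod p) = int a + int b] (mod int p)"
  by (simp add: cong_def of_nat_mod mod_simps)

lemma cmod2: "b \<le> p \<Longrightarrow> [int ((p - b) mod p) = - int b] (mod int p)"
  by (simp add: cong_def of_nat_mod of_nat_diff mod_simps)

lemma bf_add_right:
  "[bf K u (sadd p v w) = bf K u v + bf K u w] (mod int p)"
proof -
  have "[bf K u (sadd p v w) = (\<Sum>j\<in>K. int (fst u j) * (int (snd v j) + int (snd w j)) - int (snd u j) * (int (fst v j) + int (fst w j)))] (mod int p)"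
    unfolding bf_def sadd_def by (intro cong_sum cong_diff cong_mult cong_refl) (simp_all add: cmod1)
  then show ?thesis by (simp add: bf_def sum.distrib[symmetric] sum_subtractf[symmetric] algebra_simps)
qed

lemma bf_add_left:
  "[bf K (sadd p v w) u = bf K v u + bf K w u] (mod int p)"
proof -
  have "[bf K (sadd p v w) u = (\<Sum>j\<in>K. (int (fst v j) + int (fst w j)) * int (snd u j) - (int (snd v j) + int (snd w j)) * int (fst u j))] (mod int p)"
    unfolding bf_def sadd_def by (intro cong_sum cong_diff cong_mult cong_refl) (simp_all add: cmod1)
  then show ?thesis by (simp add: bf_def sum.distrib[symmetric] sum_subtractf[symmetric] algebra_simps)
qed

definition sneg :: "nat \<Rightarrow> svec \<Rightarrow> svec" where
  "sneg p y = ((\<lambda>j. (p - fst y j) mod p), (\<lambda>j. (p - snd y j) mod p))"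

lemma sneg_svecs: "y \<in> svecs p K \<Longrightarrow> sneg p y \<in> svecs p K"
  unfolding svecs_def fvec_def sneg_def by auto

lemma bf_sneg_left:
  assumes "y \<in> svecs p K'" shows "[bf K (sneg p y) u = - bf K y u] (mod int p)"
proof -
  have le: "fst y j \<le> p" "snd y j \<le> p" for j
    using assms unfolding svecs_def fvec_def by (cases "j \<in> K'"; force)+
  have "[bf K (sneg p y) u = (\<Sum>j\<in>K. (- int (fst y j)) * int (snd u j) - (- int (snd y j)) * int (fst u j))] (mod int p)"
    unfolding bf_def sneg_def by (intro cong_sum cong_diff cong_mult cong_refl) (simp_all add: cmod2 le)
  then show ?thesis by (simp add: bf_def sum_negf[symmetric] sum_subtractf[symmetric] algebra_simps)
qed

definition plus_sv :: "svec \<Rightarrow> svec \<Rightarrow> svec" where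
  "plus_sv u v = ((\<lambda>j. fst u j + fst v j), (\<lambda>j. snd u j + snd v j))"

lemma bf_plus_left: "bf K (plus_sv u v) w = bf K u w + bf K v w"
  unfolding bf_def plus_sv_def by (simp add: sum.distrib[symmetric] algebra_simps)

lemma bf_units:
  assumes p: "p > 1" and fin: "finite N" and KN: "K \<subseteq> N"
    and dv: "\<forall>h\<in>svecs p K. int p dvd (bf N h c - bf N h c')"
    and c: "c \<in> svecs p N" and c': "c' \<in> svecs p N" and j: "j \<in> K"
  shows "fst c j = fst c' j \<and> snd c j = snd c' j"
proof
  let ?h1 = "((\<lambda>i. if i = j then 1 else 0), (\<lambda>_. 0)) :: svec"
  let ?h2 = "((\<lambda>_. 0), (\<lambda>i. if i = j then 1 else 0)) :: svec"
  have h1: "?h1 \<in> svecs p K" and h2: "?h2 \<in> svecs p K"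
    using p j unfolding svecs_def fvec_def by auto
  have jN: "j \<in> N" using j KN by auto
  have "bf N ?h1 c - bf N ?h1 c' = (\<Sum>i\<in>N. if i = j then int (snd c j) - int (snd c' j) else 0)"
    unfolding bf_def sum_subtractf[symmetric] by (intro sum.cong) auto
  then have "bf N ?h1 c - bf N ?h1 c' = int (snd c j) - int (snd c' j)" using fin jN by simp
  then have "int p dvd (int (snd c j) - int (snd c' j))" using dv h1 by metis
  moreover have "snd c j < p" "snd c' j < p" using c c' jN p unfolding svecs_def fvec_def by auto
  ultimately show "snd c j = snd c' j" using cong_nat_mod_lt by blast
  have "bf N ?h2 c - bf N ?h2 c' = (\<Sum>i\<in>N. if i = j then - (int (fst c j) - int (fst c' j)) else 0)"
    unfolding bf_def sum_subtractf[symmetric] by (intro sum.cong) auto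
  then have "bf N ?h2 c - bf N ?h2 c' = - (int (fst c j) - int (fst c' j))" using fin jN by simp
  then have "int p dvd (int (fst c j) - int (fst c' j))" using dv h2 by (metis dvd_minus_iff)
  moreover have "fst c j < p" "fst c' j < p" using c c' jN p unfolding svecs_def fvec_def by auto
  ultimately show "fst c j = fst c' j" using cong_nat_mod_lt by blast
qed

definition shf :: "nat \<Rightarrow> svec \<Rightarrow> (nat \<Rightarrow> nat) \<Rightarrow> (nat \<Rightarrow> nat)" where
  "shf p y x = (\<lambda>j. (x j + fst y j) mod p)"

definition pauliK :: "nat \<Rightarrow> nat set \<Rightarrow> svec \<Rightarrow> cmat" where
  "pauliK p K y = (\<lambda>z x. if z \<in> fvec p K \<and> x \<in> fvec p K \<and> z = shf p y x
      then om p (int (\<Sum>j\<in>K. snd y j * x j)) else 0)"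

lemma pauli_eq: "pauli p n y = pauliK p {1..n} y"
  unfolding pauli_def pauliK_def xi_pow shf_def ..

lemma shf_fvec: "x \<in> fvec p K \<Longrightarrow> y \<in> svecs p K \<Longrightarrow> p > 0 \<Longrightarrow> shf p y x \<in> fvec p K"
  unfolding shf_def svecs_def fvec_def by auto

lemma shf_inj:
  assumes "x \<in> fvec p K" "x' \<in> fvec p K" "shf p y x = shf p y x'"
  shows "x = x'"
proof
  fix j
  show "x j = x' j"
  proof (cases "j \<in> K")
    case True
    have "(x j + fst y j) mod p = (x' j + fst y j) mod p"
      using fun_cong[OF assms(3), of j] unfolding shf_def by simp
    then have "x j mod p = x' j mod p" by (metis cong_add_rcancel_nat cong_def)
    then show ?thesis using True assms(1,2) unfolding fvec_def by auto
  next
    case False then show ?thesis using assms(1,2) unfolding fvec_def by auto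
  qed
qed

lemma pauli_zero: "z \<noteq> shf p y x \<Longrightarrow> pauliK p K y z x = 0"
  unfolding pauliK_def by auto

lemma pauli_unit:
  assumes p: "p > 0" and fin: "finite K" and y: "y \<in> svecs p K"
    and x: "x \<in> fvec p K" and x': "x' \<in> fvec p K"
  shows "(\<Sum>z\<in>fvec p K. cnj (pauliK p K y z x) * pauliK p K y z x') = (if x = x' then 1 else 0)"
proof -
  let ?z0 = "shf p y x"
  have z0: "?z0 \<in> fvec p K" using shf_fvec[OF x y p] .
  have "(\<Sum>z\<in>fvec p K. cnj (pauliK p K y z x) * pauliK p K y z x') =
      cnj (pauliK p K y ?z0 x) * pauliK p K y ?z0 x'"
    by (rule sum_single[OF finite_fvec[OF fin] z0]) (simp add: pauli_zero)
  also have "\<dots> = (if x = x' then 1 else 0)"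
  proof (cases "x = x'")
    case True
    have "pauliK p K y ?z0 x = om p (int (\<Sum>j\<in>K. snd y j * x j))"
      using z0 x unfolding pauliK_def by (simp only: if_True simp_thms)
    then show ?thesis using True by simp
  next
    case False
    then have "?z0 \<noteq> shf p y x'" using shf_inj[OF x x'] by blast
    then show ?thesis using False by (simp add: pauli_zero)
  qed
  finally show ?thesis .
qed

lemma cong_phase:
  "[(b::nat) * ((x + a') mod p) + b' * x = b * a' + ((b + b') mod p) * x] (mod p)"
proof -
  have A: "[b * ((x + a') mod p) + b' * x = b * (x + a') + b' * x] (mod p)"
    by (intro cong_add cong_mult cong_refl) (simp add: cong_def)
  have B: "[b * a' + ((b + b') mod p) * x = b * a' + (b + b') * x] (mod p)"
    by (intro cong_add cong_mult cong_refl) (simp add: cong_def)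
  have E: "b * (x + a') + b' * x = b * a' + (b + b') * x" by (simp add: algebra_simps)
  show ?thesis using cong_trans[OF A, unfolded E, OF cong_sym[OF B]] .
qed

lemma pauli_mult:
  assumes p: "p > 0" and fin: "finite K" and y: "y \<in> svecs p K" and y': "y' \<in> svecs p K"
  shows "mmul (fvec p K) (pauliK p K y) (pauliK p K y') z x =
     om p (int (\<Sum>j\<in>K. snd y j * fst y' j)) * pauliK p K (sadd p y y') z x"
proof (cases "x \<in> fvec p K")
  case False
  then show ?thesis unfolding mmul_def pauliK_def by simp
next
  case x: True
  let ?u0 = "shf p y' x"
  have u0: "?u0 \<in> fvec p K" using shf_fvec[OF x y' p] .
  have "mmul (fvec p K) (pauliK p K y) (pauliK p K y') z x = pauliK p K y z ?u0 * pauliK p K y' ?u0 x"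
    unfolding mmul_def by (rule sum_single[OF finite_fvec[OF fin] u0]) (simp add: pauli_zero)
  also have "\<dots> = om p (int (\<Sum>j\<in>K. snd y j * fst y' j)) * pauliK p K (sadd p y y') z x"
  proof -
    have sh: "shf p y ?u0 = shf p (sadd p y y') x"
      unfolding shf_def sadd_def by (simp add: mod_simps add_ac)
    have ph: "om p (int (\<Sum>j\<in>K. snd y j * ?u0 j)) * om p (int (\<Sum>j\<in>K. snd y' j * x j)) =
        om p (int (\<Sum>j\<in>K. snd y j * fst y' j)) * om p (int (\<Sum>j\<in>K. snd (sadd p y y') j * x j))"
    proof -
      have "[(\<Sum>j\<in>K. snd y j * ?u0 j + snd y' j * x j) = (\<Sum>j\<in>K. snd y j * fst y' j + snd (sadd p y y') j * x j)] (mod p)"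
        unfolding shf_def sadd_def by (intro cong_sum) (simp add: cong_phase)
      then have "[int (\<Sum>j\<in>K. snd y j * ?u0 j) + int (\<Sum>j\<in>K. snd y' j * x j) =
           int (\<Sum>j\<in>K. snd y j * fst y' j) + int (\<Sum>j\<in>K. snd (sadd p y y') j * x j)] (mod int p)"
        by (simp add: sum.distrib cong_int_iff[symmetric] del: of_nat_sum)
      then show ?thesis by (simp add: om_add[symmetric] om_cong[OF p])
    qed
    have "shf p (sadd p y y') x \<in> fvec p K" using shf_fvec[OF x sadd_svecs[OF y y' p] p] .
    then show ?thesis unfolding pauliK_def using sh ph x u0 by simp
  qed
  finally show ?thesis .
qed

lemma mvec_mmul: "mvec B (mmul B X Y) w = mvec B X (mvec B Y w)"
proof -
  have "(\<Sum>y\<in>B. (\<Sum>z\<in>B. X x z * Y z y) * w y) = (\<Sum>z\<in>B. X x z * (\<Sum>y\<in>B. Y z y * w y))" for x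
  proof -
    have "(\<Sum>y\<in>B. (\<Sum>z\<in>B. X x z * Y z y) * w y) = (\<Sum>y\<in>B. \<Sum>z\<in>B. X x z * (Y z y * w y))"
      by (simp add: sum_distrib_right mult.assoc)
    also have "\<dots> = (\<Sum>z\<in>B. \<Sum>y\<in>B. X x z * (Y z y * w y))" by (rule sum.swap)
    also have "\<dots> = (\<Sum>z\<in>B. X x z * (\<Sum>y\<in>B. Y z y * w y))" by (simp add: sum_distrib_left)
    finally show ?thesis .
  qed
  then show ?thesis unfolding mvec_def mmul_def by (simp add: fun_eq_iff)
qed

lemma mvec_cong: "(\<And>x. x \<in> B \<Longrightarrow> w x = w' x) \<Longrightarrow> mvec B X w = mvec B X w'"
  unfolding mvec_def by simp

locale LR =
  fixes p n :: nat and C :: "svec set" and I J :: "nat set" and lam :: "cmat \<Rightarrow> complex"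
  assumes prime: "prime p"
    and so: "symp_self_orth p n C"
    and chr: "is_character p n C lam"
    and Ine: "I \<noteq> {}" and IJ: "I \<subset> J" and JN: "J \<subset> {1..n}"
    and hyp: "shorten I (puncture J (sdual p n C)) = shorten I C"
begin

abbreviation "N \<equiv> {1..n}"
abbreviation "F \<equiv> fvec p {1..n}"

definition S :: "svec set" where
  "S = {c \<in> C. \<forall>j. j \<notin> J \<longrightarrow> fst c j = 0 \<and> snd c j = 0}"

definition zv :: svec where "zv = ((\<lambda>_. 0), (\<lambda>_. 0))"

lemma p1: "p > 1" using prime prime_gt_1_nat by blast
lemma p0: "p > 0" using p1 by simp
lemma finN: "finite N" by simp
lemma finJ: "finite J" using JN finite_subset by blast
lemma finI: "finite I" using IJ finJ finite_subset by blast
lemma JsubN: "J \<subseteq> N" using JN by blast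
lemma IsubJ: "I \<subseteq> J" using IJ by blast
lemma code: "is_code p n C" using so unfolding symp_self_orth_def by blast
lemma Csub: "C \<subseteq> svecs p N" using code unfolding is_code_def by blast
lemma finC: "finite C" using Csub finite_svecs[OF finN] finite_subset by blast
lemma Cadd: "\<forall>u\<in>C. \<forall>v\<in>C. sadd p u v \<in> C" using code unfolding is_code_def by blast
lemma zC: "zv \<in> C" using code unfolding is_code_def zv_def by blast

lemma svecs_mono: "K \<subseteq> K' \<Longrightarrow> svecs p K \<subseteq> svecs p K'"
  using p0 unfolding svecs_def fvec_def by auto

lemma zv_svecs: "zv \<in> svecs p K"
  using p0 unfolding zv_def svecs_def fvec_def by auto

lemma Ssub: "S \<subseteq> svecs p J"
proof
  fix c assume c: "c \<in> S"
  then have "c \<in> svecs p N" using Csub S_def by auto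
  then show "c \<in> svecs p J" using c JsubN unfolding S_def svecs_def fvec_def by (auto simp: subset_iff)
qed
lemma SsubC: "S \<subseteq> C" unfolding S_def by auto
lemma finS: "finite S" using finC SsubC finite_subset by blast
lemma Sadd: "\<forall>u\<in>S. \<forall>v\<in>S. sadd p u v \<in> S"
  using Cadd unfolding S_def sadd_def by auto
lemma zS: "zv \<in> S" using zC unfolding S_def zv_def by auto
lemma cardS: "card S > 0" using finS zS card_gt_0_iff by blast

lemma bf_zero_right[simp]: "bf K u zv = 0" unfolding bf_def zv_def by simp
lemma bf_zero_left[simp]: "bf K zv u = 0" unfolding bf_def zv_def by simp

lemma sv_eqI: "(\<And>j. fst u j = fst v j \<and> snd u j = snd v j) \<Longrightarrow> u = (v::svec)"
  by (simp add: prod_eq_iff fun_eq_iff)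

lemma sum_svecs_char:
  assumes K: "K \<subseteq> N" and c: "c \<in> svecs p N"
  shows "(\<Sum>h\<in>svecs p K. om p (bf N h c)) =
    (if \<forall>j\<in>K. fst c j = 0 \<and> snd c j = 0 then of_nat (card (svecs p K)) else 0)"
proof -
  have finK: "finite K" using K finite_subset by blast
  have cs: "(\<Sum>h\<in>svecs p K. om p (bf N h c)) =
     (if \<forall>h\<in>svecs p K. int p dvd bf N h c then of_nat (card (svecs p K)) else 0)"
    by (rule char_sum[OF p0 finite_svecs[OF finK] order_refl])
       (auto intro: sadd_svecs[OF _ _ p0] bf_add_left)
  have "(\<forall>h\<in>svecs p K. int p dvd bf N h c) \<longleftrightarrow> (\<forall>j\<in>K. fst c j = 0 \<and> snd c j = 0)"
  proof
    assume a: "\<forall>h\<in>svecs p K. int p dvd bf N h c"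
    show "\<forall>j\<in>K. fst c j = 0 \<and> snd c j = 0"
    proof
      fix j assume j: "j \<in> K"
      have a': "\<forall>h\<in>svecs p K. int p dvd (bf N h c - bf N h zv)" using a by simp
      have "fst c j = fst zv j \<and> snd c j = snd zv j"
        by (rule bf_units[OF p1 finN K a' c zv_svecs j])
      then show "fst c j = 0 \<and> snd c j = 0" by (simp add: zv_def)
    qed
  next
    assume a: "\<forall>j\<in>K. fst c j = 0 \<and> snd c j = 0"
    show "\<forall>h\<in>svecs p K. int p dvd bf N h c"
    proof
      fix h assume h: "h \<in> svecs p K"
      have "bf N h c = 0" unfolding bf_def
      proof (rule sum.neutral, rule ballI)
        fix j assume "j \<in> N"
        show "int (fst h j) * int (snd c j) - int (snd h j) * int (fst c j) = 0"
          by (cases "j \<in> K") (use a h in \<open>auto simp: svecs_def fvec_def\<close>)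
      qed
      then show "int p dvd bf N h c" by simp
    qed
  qed
  then show ?thesis using cs by simp
qed

lemma duality:
  assumes g: "g \<in> svecs p J" and orth: "\<forall>c\<in>S. int p dvd bf N g c"
  shows "\<exists>h\<in>svecs p (N - J). plus_sv g h \<in> sdual p n C"
proof (rule ccontr)
  let ?K = "N - J"
  assume neg: "\<not> ?thesis"
  have ghN: "plus_sv g h \<in> svecs p N" if h: "h \<in> svecs p ?K" for h
  proof -
    have "fst g j + fst h j < p \<and> snd g j + snd h j < p" if j: "j \<in> N" for j
    proof (cases "j \<in> J")
      case True
      then have "fst h j = 0" "snd h j = 0" using h unfolding svecs_def fvec_def by auto
      moreover have "fst g j < p" "snd g j < p" using g True unfolding svecs_def fvec_def by auto
      ultimately show ?thesis by simp
    next
      case False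
      then have "fst g j = 0" "snd g j = 0" using g unfolding svecs_def fvec_def by auto
      moreover have "fst h j < p" "snd h j < p" using h False j unfolding svecs_def fvec_def by auto
      ultimately show ?thesis by simp
    qed
    moreover have "fst g j + fst h j = 0 \<and> snd g j + snd h j = 0" if j: "j \<notin> N" for j
    proof -
      have "j \<notin> J" "j \<notin> N - J" using j JsubN by auto
      then show ?thesis using g h unfolding svecs_def fvec_def by auto
    qed
    ultimately show ?thesis unfolding svecs_def fvec_def plus_sv_def by auto
  qed
  have inner: "(\<Sum>c\<in>C. om p (bf N (plus_sv g h) c)) = 0" if h: "h \<in> svecs p ?K" for h
  proof -
    have "plus_sv g h \<notin> sdual p n C" using neg h by blast
    then obtain c where c: "c \<in> C" "symp p n (plus_sv g h) c \<noteq> 0"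
      using ghN[OF h] unfolding sdual_def by auto
    then have nd: "\<not> (\<forall>c\<in>C. int p dvd bf N (plus_sv g h) c)"
      unfolding symp_bf by (auto simp: dvd_eq_mod_eq_0)
    have "(\<Sum>c\<in>C. om p (bf N (plus_sv g h) c)) =
      (if \<forall>c\<in>C. int p dvd bf N (plus_sv g h) c then of_nat (card C) else 0)"
      by (rule char_sum[OF p0 finC Csub Cadd]) (auto intro: bf_add_right)
    also have "\<dots> = 0" by (rule if_not_P[OF nd])
    finally show ?thesis .
  qed
  have "(0::complex) = (\<Sum>h\<in>svecs p ?K. \<Sum>c\<in>C. om p (bf N (plus_sv g h) c))"
    using inner by simp
  also have "(\<Sum>h\<in>svecs p ?K. \<Sum>c\<in>C. om p (bf N (plus_sv g h) c)) =
      (\<Sum>c\<in>C. om p (bf N g c) * (\<Sum>h\<in>svecs p ?K. om p (bf N h c)))"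
  proof -
    have "(\<Sum>h\<in>svecs p ?K. \<Sum>c\<in>C. om p (bf N (plus_sv g h) c)) =
       (\<Sum>h\<in>svecs p ?K. \<Sum>c\<in>C. om p (bf N g c) * om p (bf N h c))"
      by (simp only: bf_plus_left om_add)
    also have "\<dots> = (\<Sum>c\<in>C. \<Sum>h\<in>svecs p ?K. om p (bf N g c) * om p (bf N h c))"
      by (rule sum.swap)
    also have "\<dots> = (\<Sum>c\<in>C. om p (bf N g c) * (\<Sum>h\<in>svecs p ?K. om p (bf N h c)))"
      by (simp only: sum_distrib_left)
    finally show ?thesis .
  qed
  also have "\<dots> = (\<Sum>c\<in>C. if \<forall>j\<in>?K. fst c j = 0 \<and> snd c j = 0 then of_nat (card (svecs p ?K)) else 0)"
  proof (rule sum.cong[OF refl])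
    fix c assume c: "c \<in> C"
    then have cN: "c \<in> svecs p N" using Csub by blast
    show "om p (bf N g c) * (\<Sum>h\<in>svecs p ?K. om p (bf N h c)) =
       (if \<forall>j\<in>?K. fst c j = 0 \<and> snd c j = 0 then of_nat (card (svecs p ?K)) else 0)"
    proof (cases "\<forall>j\<in>?K. fst c j = 0 \<and> snd c j = 0")
      case True
      have "\<forall>j. j \<notin> J \<longrightarrow> fst c j = 0 \<and> snd c j = 0"
      proof (intro allI impI)
        fix j assume j: "j \<notin> J"
        show "fst c j = 0 \<and> snd c j = 0"
        proof (cases "j \<in> N")
          case True then show ?thesis using \<open>\<forall>j\<in>?K. fst c j = 0 \<and> snd c j = 0\<close> j by blast
        next
          case False then show ?thesis using cN unfolding svecs_def fvec_def by auto
        qed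
      qed
      then have "c \<in> S" using c unfolding S_def by auto
      then have "om p (bf N g c) = 1" using orth om_eq_1[OF p0] by blast
      then show ?thesis using sum_svecs_char[OF Diff_subset[of N J] cN] unfolding if_P[OF True] by simp
    next
      case False then show ?thesis using sum_svecs_char[OF Diff_subset[of N J] cN] unfolding if_not_P[OF False] by simp
    qed
  qed
  also have "(\<Sum>c\<in>C. (if \<forall>j\<in>?K. fst c j = 0 \<and> snd c j = 0 then of_nat (card (svecs p ?K)) else 0) :: complex)
      = of_nat (card {c \<in> C. \<forall>j\<in>?K. fst c j = 0 \<and> snd c j = 0} * card (svecs p ?K))"
  proof -
    have "(\<Sum>c\<in>C. (if \<forall>j\<in>?K. fst c j = 0 \<and> snd c j = 0 then of_nat (card (svecs p ?K)) else 0) :: complex)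
      = (\<Sum>c\<in>{c \<in> C. \<forall>j\<in>?K. fst c j = 0 \<and> snd c j = 0}. of_nat (card (svecs p ?K)))"
      by (rule sum.inter_filter[symmetric, OF finC])
    also have "\<dots> = of_nat (card {c \<in> C. \<forall>j\<in>?K. fst c j = 0 \<and> snd c j = 0}) * of_nat (card (svecs p ?K))"
      by (rule sum_constant)
    finally show ?thesis by (simp only: of_nat_mult)
  qed
  finally have Z: "card {c \<in> C. \<forall>j\<in>?K. fst c j = 0 \<and> snd c j = 0} * card (svecs p ?K) = 0"
    by (rule of_nat_eq_0_iff[THEN iffD1, OF sym])
  have "card {c \<in> C. \<forall>j\<in>?K. fst c j = 0 \<and> snd c j = 0} > 0"
  proof -
    have "zv \<in> {c \<in> C. \<forall>j\<in>?K. fst c j = 0 \<and> snd c j = 0}" using zC by (simp add: zv_def)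
    moreover have "finite {c \<in> C. \<forall>j\<in>?K. fst c j = 0 \<and> snd c j = 0}" using finC by simp
    ultimately show ?thesis using card_gt_0_iff by blast
  qed
  moreover have "card (svecs p ?K) > 0"
    using svecs_ne[OF p0] finite_svecs[of ?K p] card_gt_0_iff by blast
  ultimately show False using Z by simp
qed

lemma key:
  assumes f: "f \<in> svecs p I" and orth: "\<forall>c\<in>S. int p dvd bf N f c"
  shows "f \<in> C"
proof -
  have fJ: "f \<in> svecs p J" using f svecs_mono[OF IsubJ] by blast
  obtain h where h: "h \<in> svecs p (N - J)" and d: "plus_sv f h \<in> sdual p n C"
    using duality[OF fJ orth] by blast
  have pj: "proj J (plus_sv f h) = f"
  proof (rule sv_eqI)
    fix j
    show "fst (proj J (plus_sv f h)) j = fst f j \<and> snd (proj J (plus_sv f h)) j = snd f j"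
    proof (cases "j \<in> J")
      case True
      then have "j \<notin> N - J" by blast
      then have "fst h j = 0" "snd h j = 0" using h unfolding svecs_def fvec_def by auto
      then show ?thesis using True unfolding proj_def plus_sv_def by simp
    next
      case False
      then have "fst f j = 0" "snd f j = 0" using fJ unfolding svecs_def fvec_def by auto
      then show ?thesis using False unfolding proj_def plus_sv_def by simp
    qed
  qed
  have fp: "f \<in> puncture J (sdual p n C)" unfolding puncture_def using image_eqI[of f "proj J" "plus_sv f h", OF pj[symmetric] d] .
  have fz: "\<forall>j. j \<notin> I \<longrightarrow> fst f j = 0 \<and> snd f j = 0" using f unfolding svecs_def fvec_def by auto
  have pi: "proj I f = f"
  proof (rule sv_eqI)
    fix j show "fst (proj I f) j = fst f j \<and> snd (proj I f) j = snd f j"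
      using fz unfolding proj_def by (cases "j \<in> I") auto
  qed
  have "f \<in> shorten I (puncture J (sdual p n C))" unfolding shorten_def
  proof (rule CollectI, rule exI[of _ f], intro conjI)
    show "f = proj I f" using pi by simp
  qed (use fp fz in auto)
  then have "f \<in> shorten I C" using hyp by simp
  then obtain y where y: "y \<in> C" "f = proj I y" "\<forall>j. j \<notin> I \<longrightarrow> fst y j = 0 \<and> snd y j = 0"
    unfolding shorten_def by blast
  have "proj I y = y"
  proof (rule sv_eqI)
    fix j show "fst (proj I y) j = fst y j \<and> snd (proj I y) j = snd y j"
      using y(3) unfolding proj_def by (cases "j \<in> I") auto
  qed
  then show ?thesis using y by simp
qed

end

lemma mvec_scal: "mvec B (\<lambda>z x. k * M z x) w z = k * mvec B M w z"
  unfolding mvec_def by (simp add: sum_distrib_left mult.assoc)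

lemma mvec_scal_vec: "mvec B M (\<lambda>x. k * w x) z = k * mvec B M w z"
  unfolding mvec_def by (simp add: sum_distrib_left mult_ac)

lemma mvec_sum: "mvec B (\<lambda>z x. \<Sum>c\<in>S. f c * M c z x) w z = (\<Sum>c\<in>S. f c * mvec B (M c) w z)"
proof -
  have "mvec B (\<lambda>z x. \<Sum>c\<in>S. f c * M c z x) w z = (\<Sum>x\<in>B. \<Sum>c\<in>S. f c * (M c z x * w x))"
    unfolding mvec_def by (simp add: sum_distrib_right mult.assoc)
  also have "\<dots> = (\<Sum>c\<in>S. \<Sum>x\<in>B. f c * (M c z x * w x))" by (rule sum.swap)
  also have "\<dots> = (\<Sum>c\<in>S. f c * mvec B (M c) w z)" unfolding mvec_def by (simp add: sum_distrib_left)
  finally show ?thesis .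
qed

lemma mmul_sum_right: "mmul B X (\<lambda>a b. \<Sum>c\<in>S. f c * M c a b) x y = (\<Sum>c\<in>S. f c * mmul B X (M c) x y)"
proof -
  have "mmul B X (\<lambda>a b. \<Sum>c\<in>S. f c * M c a b) x y = (\<Sum>z\<in>B. \<Sum>c\<in>S. f c * (X x z * M c z y))"
    unfolding mmul_def by (simp add: sum_distrib_left mult_ac)
  also have "\<dots> = (\<Sum>c\<in>S. \<Sum>z\<in>B. f c * (X x z * M c z y))" by (rule sum.swap)
  also have "\<dots> = (\<Sum>c\<in>S. f c * mmul B X (M c) x y)" unfolding mmul_def by (simp add: sum_distrib_left)
  finally show ?thesis .
qed

lemma ketbra_sandwich:
  "mmul B (mmul B M (ketbra w)) (madj M) x y = ketbra (mvec B M w) x y"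
proof -
  have "mmul B (mmul B M (ketbra w)) (madj M) x y =
      (\<Sum>z\<in>B. (\<Sum>u\<in>B. M x u * (w u * cnj (w z))) * cnj (M y z))"
    unfolding mmul_def ketbra_def madj_def ..
  also have "\<dots> = (\<Sum>z\<in>B. (\<Sum>u\<in>B. M x u * w u) * (cnj (w z) * cnj (M y z)))"
  proof (rule sum.cong[OF refl])
    fix z
    have "(\<Sum>u\<in>B. M x u * (w u * cnj (w z))) = (\<Sum>u\<in>B. M x u * w u) * cnj (w z)"
      by (simp add: sum_distrib_right sum_distrib_left mult_ac)
    then show "(\<Sum>u\<in>B. M x u * (w u * cnj (w z))) * cnj (M y z) = (\<Sum>u\<in>B. M x u * w u) * (cnj (w z) * cnj (M y z))"
      by (simp add: mult_ac)
  qed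
  also have "\<dots> = (\<Sum>u\<in>B. M x u * w u) * (\<Sum>z\<in>B. cnj (w z) * cnj (M y z))"
    by (simp add: sum_distrib_left)
  also have "\<dots> = ketbra (mvec B M w) x y"
    unfolding ketbra_def mvec_def by (simp add: cnj_sum mult_ac)
  finally show ?thesis .
qed

lemma sandwich_lin:
  "mmul B (mmul B L (\<lambda>a b. c0 * (\<Sum>e\<in>E. K e a b))) R x y = c0 * (\<Sum>e\<in>E. mmul B (mmul B L (K e)) R x y)"
proof -
  have "mmul B (mmul B L (\<lambda>a b. c0 * (\<Sum>e\<in>E. K e a b))) R x y =
     (\<Sum>z\<in>B. \<Sum>u\<in>B. \<Sum>e\<in>E. c0 * (L x u * K e u z * R z y))"
    unfolding mmul_def by (simp add: sum_distrib_left sum_distrib_right mult_ac)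
  also have "\<dots> = (\<Sum>z\<in>B. \<Sum>e\<in>E. \<Sum>u\<in>B. c0 * (L x u * K e u z * R z y))"
    by (simp only: sum.swap[of _ B E])
  also have "\<dots> = (\<Sum>e\<in>E. \<Sum>z\<in>B. \<Sum>u\<in>B. c0 * (L x u * K e u z * R z y))"
    by (rule sum.swap)
  also have "\<dots> = c0 * (\<Sum>e\<in>E. mmul B (mmul B L (K e)) R x y)"
    unfolding mmul_def by (simp add: sum_distrib_left sum_distrib_right mult_ac)
  finally show ?thesis .
qed

lemma unit_sandwich:
  assumes fin: "finite B"
    and U: "\<And>w w'. w \<in> B \<Longrightarrow> w' \<in> B \<Longrightarrow> (\<Sum>z\<in>B. cnj (U z w) * U z w') = (if w = w' then 1 else 0)"
  shows "(\<Sum>z\<in>B. cnj (mmul B U P z x) * mmul B U P z y) = (\<Sum>w\<in>B. cnj (P w x) * P w y)"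
proof -
  have "(\<Sum>z\<in>B. cnj (mmul B U P z x) * mmul B U P z y) =
      (\<Sum>z\<in>B. \<Sum>w\<in>B. \<Sum>w'\<in>B. (cnj (U z w) * cnj (P w x)) * (U z w' * P w' y))"
    by (simp only: mmul_def cnj_sum complex_cnj_mult sum_product)
  also have "\<dots> = (\<Sum>w\<in>B. \<Sum>z\<in>B. \<Sum>w'\<in>B. (cnj (U z w) * cnj (P w x)) * (U z w' * P w' y))"
    by (rule sum.swap)
  also have "\<dots> = (\<Sum>w\<in>B. \<Sum>w'\<in>B. \<Sum>z\<in>B. (cnj (U z w) * cnj (P w x)) * (U z w' * P w' y))"
    by (rule sum.cong[OF refl], rule sum.swap)
  also have "\<dots> = (\<Sum>w\<in>B. \<Sum>w'\<in>B. (cnj (P w x) * P w' y) * (\<Sum>z\<in>B. cnj (U z w) * U z w'))"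
  proof (rule sum.cong[OF refl], rule sum.cong[OF refl])
    fix w w'
    have "\<And>z. (cnj (U z w) * cnj (P w x)) * (U z w' * P w' y) = (cnj (P w x) * P w' y) * (cnj (U z w) * U z w')"
      by (simp only: mult_ac)
    then show "(\<Sum>z\<in>B. (cnj (U z w) * cnj (P w x)) * (U z w' * P w' y)) =
        (cnj (P w x) * P w' y) * (\<Sum>z\<in>B. cnj (U z w) * U z w')"
      by (simp only: sum_distrib_left)
  qed
  also have "\<dots> = (\<Sum>w\<in>B. cnj (P w x) * P w y)"
  proof (rule sum.cong[OF refl])
    fix w assume w: "w \<in> B"
    have "(\<Sum>w'\<in>B. (cnj (P w x) * P w' y) * (\<Sum>z\<in>B. cnj (U z w) * U z w')) =
        (cnj (P w x) * P w y) * (\<Sum>z\<in>B. cnj (U z w) * U z w)"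
      by (rule sum_single[OF fin w]) (simp add: U w)
    then show "(\<Sum>w'\<in>B. (cnj (P w x) * P w' y) * (\<Sum>z\<in>B. cnj (U z w) * U z w')) = cnj (P w x) * P w y"
      by (simp add: U w)
  qed
  finally show ?thesis .
qed

lemma list_sum_set:
  assumes "distinct vs"
  shows "(\<Sum>k<length (map A vs). g (map A vs ! k)) = (\<Sum>v\<in>set vs. g (A v))"
proof -
  have "(\<Sum>v\<in>set vs. g (A v)) = sum_list (map (\<lambda>v. g (A v)) vs)"
    using assms by (simp add: sum_list_distinct_conv_sum_set)
  also have "\<dots> = (\<Sum>k<length vs. g (A (vs ! k)))"
    by (simp add: sum_list_sum_nth atLeast0LessThan)
  finally show ?thesis by simp
qed

lemma local_op_sum:
  "local_op p n J (\<lambda>x y. \<Sum>c\<in>S. f c * M c x y) x y = (\<Sum>c\<in>S. f c * local_op p n J (M c) x y)"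
proof (cases "x \<in> fvec p {1..n} \<and> y \<in> fvec p {1..n} \<and> (\<forall>j. j \<notin> J \<longrightarrow> x j = y j)")
  case True then show ?thesis unfolding local_op_def by simp
next
  case False then show ?thesis unfolding local_op_def if_not_P[OF False] by simp
qed

context LR begin

definition lmb :: "svec \<Rightarrow> complex" where "lmb c = lam (pauli p n c)"

lemma eig:
  assumes phi: "phi \<in> stab_code p n C lam" and c: "c \<in> C" and x: "x \<in> F"
  shows "mvec F (pauliK p N c) phi x = lmb c * phi x"
proof -
  have "pauli p n c \<in> stab_group p n C" using c by (rule stab_group.gen)
  then show ?thesis using phi x unfolding stab_code_def lmb_def pauli_eq by blast
qed

lemma prod_mvec:
  assumes y: "y \<in> svecs p N" and y': "y' \<in> svecs p N"
  shows "mvec F (pauliK p N y) (mvec F (pauliK p N y') w) z =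
    om p (int (\<Sum>j\<in>N. snd y j * fst y' j)) * mvec F (pauliK p N (sadd p y y')) w z"
proof -
  have "mvec F (pauliK p N y) (mvec F (pauliK p N y') w) z = mvec F (mmul F (pauliK p N y) (pauliK p N y')) w z"
    by (simp add: mvec_mmul)
  also have "mmul F (pauliK p N y) (pauliK p N y') =
     (\<lambda>z x. om p (int (\<Sum>j\<in>N. snd y j * fst y' j)) * pauliK p N (sadd p y y') z x)"
    using pauli_mult[OF p0 finN y y'] by (simp add: fun_eq_iff)
  finally show ?thesis by (simp add: mvec_scal)
qed

lemma sadd_comm: "sadd p u v = sadd p v u"
  unfolding sadd_def by (simp add: add.commute)

lemma comm:
  assumes phi: "phi \<in> stab_code p n C lam" and c: "c \<in> C" and e: "e \<in> svecs p N" and x: "x \<in> F"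
  shows "mvec F (pauliK p N c) (mvec F (pauliK p N e) phi) x = om p (bf N e c) * lmb c * mvec F (pauliK p N e) phi x"
proof -
  have cN: "c \<in> svecs p N" using c Csub by blast
  let ?A = "int (\<Sum>j\<in>N. snd c j * fst e j)" and ?B = "int (\<Sum>j\<in>N. snd e j * fst c j)"
  have 1: "mvec F (pauliK p N c) (mvec F (pauliK p N e) phi) x = om p ?A * mvec F (pauliK p N (sadd p c e)) phi x"
    by (rule prod_mvec[OF cN e])
  have "mvec F (pauliK p N e) (mvec F (pauliK p N c) phi) x = om p ?B * mvec F (pauliK p N (sadd p e c)) phi x"
    by (rule prod_mvec[OF e cN])
  moreover have "mvec F (pauliK p N e) (mvec F (pauliK p N c) phi) x = mvec F (pauliK p N e) (\<lambda>z. lmb c * phi z) x"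
    by (rule arg_cong[where f="\<lambda>w. w x"], rule mvec_cong, rule eig[OF phi c])
  ultimately have 2: "om p ?B * mvec F (pauliK p N (sadd p c e)) phi x = lmb c * mvec F (pauliK p N e) phi x"
    by (simp add: mvec_scal_vec sadd_comm)
  have "om p (- ?B) * om p ?B = 1" by (simp add: om_add[symmetric])
  then have 3: "mvec F (pauliK p N (sadd p c e)) phi x = om p (- ?B) * lmb c * mvec F (pauliK p N e) phi x"
    using 2 by (metis (no_types, lifting) mult.assoc mult_1)
  have "bf N e c = ?A - ?B" unfolding bf_def by (simp add: sum_subtractf mult.commute)
  then have "om p (bf N e c) = om p ?A * om p (- ?B)" by (simp add: om_add[symmetric])
  then show ?thesis using 1 3 by (simp add: mult_ac)
qed

lemma lmb_norm:
  assumes phi: "phi \<in> stab_code p n C lam" and x0: "x0 \<in> F" and nz: "phi x0 \<noteq> 0" and c: "c \<in> C"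
  shows "cnj (lmb c) * lmb c = 1"
proof -
  have cN: "c \<in> svecs p N" using c Csub by blast
  have U: "\<And>w w'. w \<in> F \<Longrightarrow> w' \<in> F \<Longrightarrow> (\<Sum>z\<in>F. cnj (pauliK p N c z w) * pauliK p N c z w') = (if w = w' then 1 else 0)"
    by (rule pauli_unit[OF p0 finN cN])
  have mv: "mvec F (pauliK p N c) phi z = mmul F (pauliK p N c) (\<lambda>a b. phi a) z undefined" for z
    unfolding mvec_def mmul_def ..
  have "(\<Sum>z\<in>F. cnj (mvec F (pauliK p N c) phi z) * mvec F (pauliK p N c) phi z) = (\<Sum>w\<in>F. cnj (phi w) * phi w)"
    unfolding mv using unit_sandwich[OF finite_fvec[OF finN] U, of "\<lambda>a b. phi a"] by simp
  moreover have "(\<Sum>z\<in>F. cnj (mvec F (pauliK p N c) phi z) * mvec F (pauliK p N c) phi z) =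
      (cnj (lmb c) * lmb c) * (\<Sum>w\<in>F. cnj (phi w) * phi w)"
  proof -
    have "(\<Sum>z\<in>F. cnj (mvec F (pauliK p N c) phi z) * mvec F (pauliK p N c) phi z) =
        (\<Sum>z\<in>F. (cnj (lmb c) * lmb c) * (cnj (phi z) * phi z))"
    proof (rule sum.cong[OF refl])
      fix z assume z: "z \<in> F"
      show "cnj (mvec F (pauliK p N c) phi z) * mvec F (pauliK p N c) phi z = (cnj (lmb c) * lmb c) * (cnj (phi z) * phi z)"
        using eig[OF phi c z] by (simp add: mult_ac)
    qed
    then show ?thesis by (simp add: sum_distrib_left)
  qed
  ultimately have "(cnj (lmb c) * lmb c - 1) * (\<Sum>w\<in>F. cnj (phi w) * phi w) = 0"
    by (simp add: algebra_simps)
  moreover have "(\<Sum>w\<in>F. cnj (phi w) * phi w) \<noteq> 0"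
  proof -
    have "(\<Sum>w\<in>F. cnj (phi w) * phi w) = (\<Sum>w\<in>F. of_real ((cmod (phi w))\<^sup>2))"
      by (rule sum.cong[OF refl], subst complex_norm_square) (rule mult.commute)
    also have "\<dots> = of_real (\<Sum>w\<in>F. (cmod (phi w))\<^sup>2)" by (rule of_real_sum[symmetric])
    finally have "(\<Sum>w\<in>F. cnj (phi w) * phi w) = of_real (\<Sum>w\<in>F. (cmod (phi w))\<^sup>2)" .
    moreover have "(\<Sum>w\<in>F. (cmod (phi w))\<^sup>2) > 0"
      by (rule sum_pos2[OF finite_fvec[OF finN] x0]) (simp_all add: nz)
    ultimately show ?thesis by (metis of_real_eq_0_iff less_irrefl)
  qed
  ultimately show ?thesis by simp
qed

lemma local_pauli:
  assumes u: "u \<in> svecs p J"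
  shows "local_op p n J (pauliK p J u) = pauliK p N u"
proof (rule ext, rule ext)
  fix x y
  have uz: "fst u j = 0" "snd u j = 0" if "j \<notin> J" for j using u that unfolding svecs_def fvec_def by auto
  show "local_op p n J (pauliK p J u) x y = pauliK p N u x y"
  proof (cases "x \<in> F \<and> y \<in> F \<and> (\<forall>j. j \<notin> J \<longrightarrow> x j = y j)")
    case True
    then have x: "x \<in> F" and y: "y \<in> F" and ag: "\<forall>j. j \<notin> J \<longrightarrow> x j = y j" by auto
    have rx: "restr J x \<in> fvec p J" and ry: "restr J y \<in> fvec p J"
      using x y JsubN unfolding restr_def fvec_def by auto
    have ylt: "y j mod p = y j" for j
    proof (cases "j \<in> N")
      case True then show ?thesis using y by (simp add: fvec_def)
    next
      case False then show ?thesis using y by (simp add: fvec_def)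
    qed
    have eqv: "(restr J x = shf p u (restr J y)) \<longleftrightarrow> (x = shf p u y)"
    proof
      assume h: "restr J x = shf p u (restr J y)"
      show "x = shf p u y"
      proof
        fix j show "x j = shf p u y j"
        proof (cases "j \<in> J")
          case True then show ?thesis using fun_cong[OF h, of j] unfolding restr_def shf_def by simp
        next
          case False then show ?thesis using ag uz[OF False] ylt[of j] unfolding shf_def by simp
        qed
      qed
    next
      assume h: "x = shf p u y"
      show "restr J x = shf p u (restr J y)"
      proof
        fix j show "restr J x j = shf p u (restr J y) j"
        proof (cases "j \<in> J")
          case True then show ?thesis using fun_cong[OF h, of j] unfolding restr_def shf_def by simp
        next
          case False then show ?thesis using uz[OF False] unfolding restr_def shf_def by simp
        qed
      qed
    qed
    have sm: "(\<Sum>j\<in>J. snd u j * restr J y j) = (\<Sum>j\<in>N. snd u j * y j)"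
    proof -
      have "(\<Sum>j\<in>J. snd u j * restr J y j) = (\<Sum>j\<in>J. snd u j * y j)"
        unfolding restr_def by simp
      also have "\<dots> = (\<Sum>j\<in>N. snd u j * y j)"
        by (rule sum.mono_neutral_left[OF finN JsubN]) (simp add: uz)
      finally show ?thesis .
    qed
    show ?thesis unfolding local_op_def pauliK_def using True rx ry eqv sm by simp
  next
    case False
    then have "pauliK p N u x y = 0"
    proof (cases "x \<in> F \<and> y \<in> F")
      case True
      with False obtain j where j: "j \<notin> J" "x j \<noteq> y j" by blast
      have "y j mod p = y j" using True unfolding fvec_def by (cases "j \<in> N") auto
      then have "x \<noteq> shf p u y" using j uz[OF j(1)] unfolding shf_def by (metis add_0_right)
      then show ?thesis by (rule pauli_zero)
    next
      case False then show ?thesis unfolding pauliK_def by auto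
    qed
    then show ?thesis unfolding local_op_def if_not_P[OF False] by simp
  qed
qed

lemma ortho_v:
  assumes c: "c \<in> S" and c': "c' \<in> S"
  shows "(\<Sum>v\<in>svecs p J. om p (bf N v c - bf N v c')) = (if c = c' then of_nat (card (svecs p J)) else 0)"
proof -
  have cs: "(\<Sum>v\<in>svecs p J. om p (bf N v c - bf N v c')) =
     (if \<forall>v\<in>svecs p J. int p dvd (bf N v c - bf N v c') then of_nat (card (svecs p J)) else 0)"
  proof (rule char_sum[OF p0 finite_svecs[OF finJ] order_refl])
    show "\<forall>u\<in>svecs p J. \<forall>v\<in>svecs p J. sadd p u v \<in> svecs p J" using sadd_svecs[OF _ _ p0] by blast
    show "\<forall>u\<in>svecs p J. \<forall>v\<in>svecs p J. [bf N (sadd p u v) c - bf N (sadd p u v) c' =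
        bf N u c - bf N u c' + (bf N v c - bf N v c')] (mod int p)"
    proof (intro ballI)
      fix u v
      have "[bf N (sadd p u v) c - bf N (sadd p u v) c' = (bf N u c + bf N v c) - (bf N u c' + bf N v c')] (mod int p)"
        by (intro cong_diff bf_add_left)
      then show "[bf N (sadd p u v) c - bf N (sadd p u v) c' = bf N u c - bf N u c' + (bf N v c - bf N v c')] (mod int p)"
        by (simp add: algebra_simps)
    qed
  qed
  have cN: "c \<in> svecs p N" "c' \<in> svecs p N" using c c' SsubC Csub by auto
  have "(\<forall>v\<in>svecs p J. int p dvd (bf N v c - bf N v c')) \<longleftrightarrow> c = c'"
  proof
    assume a: "\<forall>v\<in>svecs p J. int p dvd (bf N v c - bf N v c')"
    show "c = c'"
    proof (rule sv_eqI)
      fix j show "fst c j = fst c' j \<and> snd c j = snd c' j"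
      proof (cases "j \<in> J")
        case True then show ?thesis by (rule bf_units[OF p1 finN JsubN a cN])
      next
        case False then show ?thesis using c c' unfolding S_def by auto
      qed
    qed
  qed simp
  then show ?thesis using cs by simp
qed

end

context LR begin

abbreviation "FJ \<equiv> fvec p J"

definition cnd :: "svec \<Rightarrow> svec \<Rightarrow> bool" where
  "cnd v e \<longleftrightarrow> (\<forall>c\<in>S. int p dvd (bf N e c - bf N v c))"

definition rr :: "svec \<Rightarrow> svec" where
  "rr v = (if \<exists>e\<in>svecs p I. cnd v e then SOME e. e \<in> svecs p I \<and> cnd v e else zv)"

definition al :: "svec \<Rightarrow> svec \<Rightarrow> complex" where
  "al v c = cnj (lmb c) * om p (- bf N v c)"

definition gr :: real where
  "gr = sqrt (real (card S) / real (card (svecs p J))) / real (card S)"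

definition gam :: complex where "gam = of_real gr"

definition PJ :: "svec \<Rightarrow> cmat" where
  "PJ v = (\<lambda>x y. \<Sum>c\<in>S. gam * al v c * pauliK p J c x y)"

definition AJ :: "svec \<Rightarrow> cmat" where
  "AJ v = mmul FJ (pauliK p J (sneg p (rr v))) (PJ v)"

lemma rr_svecs: "rr v \<in> svecs p I"
proof (cases "\<exists>e\<in>svecs p I. cnd v e")
  case True
  then have "\<exists>e. e \<in> svecs p I \<and> cnd v e" by blast
  then show ?thesis unfolding rr_def using True someI_ex by (metis (no_types, lifting))
next
  case False then show ?thesis unfolding rr_def using zv_svecs by simp
qed

lemma rr_cnd: assumes "cnd v e" "e \<in> svecs p I" shows "cnd v (rr v)"
proof -
  have ex: "\<exists>e. e \<in> svecs p I \<and> cnd v e" using assms by blast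
  then have "rr v = (SOME e. e \<in> svecs p I \<and> cnd v e)" unfolding rr_def by auto
  then show ?thesis using someI_ex[OF ex] by simp
qed

lemma nr_J: "sneg p (rr v) \<in> svecs p J"
  using sneg_svecs[OF rr_svecs] svecs_mono[OF IsubJ] by blast
lemma nr_N: "sneg p (rr v) \<in> svecs p N"
  using nr_J svecs_mono[OF JsubN] by blast

lemma finFJ: "finite FJ" using finite_fvec[OF finJ] .
lemma cardvJ: "card (svecs p J) > 0"
  using finite_svecs[OF finJ] zv_svecs card_gt_0_iff by blast

lemma gam_sq: "cnj gam * gam * of_nat (card S) * of_nat (card (svecs p J)) = 1"
proof -
  let ?s = "real (card S)" and ?v = "real (card (svecs p J))"
  have s: "?s > 0" and v: "?v > 0" using cardS cardvJ by auto
  have "gr * gr * ?s * ?v = (sqrt (?s / ?v))\<^sup>2 / ?s / ?s * ?s * ?v"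
    unfolding gr_def by (simp add: power2_eq_square)
  also have "\<dots> = 1" using s v by (simp add: field_simps)
  finally have "gr * gr * ?s * ?v = 1" .
  then have "complex_of_real (gr * gr * ?s * ?v) = 1" by simp
  then show ?thesis unfolding gam_def by simp
qed

lemma cnj_al: "cnj (al v c) * al v c' = lmb c * cnj (lmb c') * om p (bf N v c - bf N v c')"
proof -
  have 1: "cnj (al v c) = lmb c * om p (bf N v c)" unfolding al_def by (simp add: om_cnj)
  have "cnj (al v c) * al v c' = (lmb c * om p (bf N v c)) * (cnj (lmb c') * om p (- bf N v c'))"
    by (subst 1) (simp only: al_def)
  then have "cnj (al v c) * al v c' = lmb c * cnj (lmb c') * (om p (bf N v c) * om p (- bf N v c'))"
    by (simp only: mult_ac)
  then show ?thesis by (simp add: om_add[symmetric])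
qed

lemma sv_al:
  assumes unit: "\<forall>c\<in>C. cnj (lmb c) * lmb c = 1" and c: "c \<in> S" and c': "c' \<in> S"
  shows "(\<Sum>v\<in>svecs p J. cnj (al v c) * al v c') = (if c = c' then of_nat (card (svecs p J)) else 0)"
proof -
  have "(\<Sum>v\<in>svecs p J. cnj (al v c) * al v c') = lmb c * cnj (lmb c') * (\<Sum>v\<in>svecs p J. om p (bf N v c - bf N v c'))"
    by (simp add: cnj_al sum_distrib_left)
  also have "\<dots> = lmb c * cnj (lmb c') * (if c = c' then of_nat (card (svecs p J)) else 0)"
    by (simp only: ortho_v[OF c c'])
  also have "\<dots> = (if c = c' then of_nat (card (svecs p J)) else 0)"
  proof (cases "c = c'")
    case True
    have "lmb c * cnj (lmb c) = 1" using unit c SsubC by (metis mult.commute subsetD)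
    then show ?thesis using True by simp
  qed simp
  finally show ?thesis .
qed

lemma TP:
  assumes unit: "\<forall>c\<in>C. cnj (lmb c) * lmb c = 1" and x: "x \<in> FJ" and y: "y \<in> FJ"
  shows "(\<Sum>v\<in>svecs p J. mmul FJ (madj (AJ v)) (AJ v) x y) = ident FJ x y"
proof -
  let ?E = "\<lambda>c. pauliK p J c"
  let ?K = "cnj gam * gam"
  have Ssv: "\<And>c. c \<in> S \<Longrightarrow> c \<in> svecs p J" using Ssub by blast
  have a: "mmul FJ (madj (AJ v)) (AJ v) x y = (\<Sum>w\<in>FJ. cnj (PJ v w x) * PJ v w y)" for v
  proof -
    have "mmul FJ (madj (AJ v)) (AJ v) x y = (\<Sum>z\<in>FJ. cnj (AJ v z x) * AJ v z y)"
      unfolding mmul_def madj_def ..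
    also have "\<dots> = (\<Sum>w\<in>FJ. cnj (PJ v w x) * PJ v w y)"
      unfolding AJ_def by (rule unit_sandwich[OF finFJ pauli_unit[OF p0 finJ nr_J]])
    finally show ?thesis .
  qed
  have c: "(\<Sum>v\<in>svecs p J. cnj (PJ v w x) * PJ v w y) =
      ?K * of_nat (card (svecs p J)) * (\<Sum>c\<in>S. cnj (?E c w x) * ?E c w y)" for w
  proof -
    have "(\<Sum>v\<in>svecs p J. cnj (PJ v w x) * PJ v w y) =
        (\<Sum>v\<in>svecs p J. \<Sum>c\<in>S. \<Sum>c'\<in>S. (?K * (cnj (?E c w x) * ?E c' w y)) * (cnj (al v c) * al v c'))"
      unfolding PJ_def cnj_sum complex_cnj_mult sum_product
      by (intro sum.cong refl) (simp only: mult_ac)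
    also have "\<dots> = (\<Sum>c\<in>S. \<Sum>v\<in>svecs p J. \<Sum>c'\<in>S. (?K * (cnj (?E c w x) * ?E c' w y)) * (cnj (al v c) * al v c'))"
      by (rule sum.swap)
    also have "\<dots> = (\<Sum>c\<in>S. \<Sum>c'\<in>S. \<Sum>v\<in>svecs p J. (?K * (cnj (?E c w x) * ?E c' w y)) * (cnj (al v c) * al v c'))"
      by (rule sum.cong[OF refl], rule sum.swap)
    also have "\<dots> = (\<Sum>c\<in>S. \<Sum>c'\<in>S. (?K * (cnj (?E c w x) * ?E c' w y)) * (if c = c' then of_nat (card (svecs p J)) else 0))"
      by (rule sum.cong[OF refl], rule sum.cong[OF refl]) (simp only: sum_distrib_left[symmetric] sv_al[OF unit])
    also have "\<dots> = (\<Sum>c\<in>S. (?K * (cnj (?E c w x) * ?E c w y)) * of_nat (card (svecs p J)))"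
    proof (rule sum.cong[OF refl])
      fix c assume cS: "c \<in> S"
      show "(\<Sum>c'\<in>S. (?K * (cnj (?E c w x) * ?E c' w y)) * (if c = c' then of_nat (card (svecs p J)) else 0)) =
          (?K * (cnj (?E c w x) * ?E c w y)) * of_nat (card (svecs p J))"
        by (subst sum_single[OF finS cS]) auto
    qed
    also have "\<dots> = ?K * of_nat (card (svecs p J)) * (\<Sum>c\<in>S. cnj (?E c w x) * ?E c w y)"
      by (simp add: sum_distrib_left mult_ac)
    finally show ?thesis .
  qed
  have "(\<Sum>v\<in>svecs p J. mmul FJ (madj (AJ v)) (AJ v) x y) = (\<Sum>v\<in>svecs p J. \<Sum>w\<in>FJ. cnj (PJ v w x) * PJ v w y)"
    by (simp only: a)
  also have "\<dots> = (\<Sum>w\<in>FJ. \<Sum>v\<in>svecs p J. cnj (PJ v w x) * PJ v w y)" by (rule sum.swap)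
  also have "\<dots> = (\<Sum>w\<in>FJ. ?K * of_nat (card (svecs p J)) * (\<Sum>c\<in>S. cnj (?E c w x) * ?E c w y))"
    by (simp only: c)
  also have "\<dots> = ?K * of_nat (card (svecs p J)) * (\<Sum>c\<in>S. \<Sum>w\<in>FJ. cnj (?E c w x) * ?E c w y)"
    by (simp only: sum_distrib_left[symmetric] sum.swap[of _ FJ S])
  also have "\<dots> = ?K * of_nat (card (svecs p J)) * (\<Sum>c\<in>S. (if x = y then 1 else 0))"
    by (simp only: pauli_unit[OF p0 finJ Ssv x y] cong: sum.cong)
  also have "\<dots> = (if x = y then 1 else 0)"
    using gam_sq by (simp add: mult_ac)
  also have "\<dots> = ident FJ x y" unfolding ident_def using x y by simp
  finally show ?thesis .
qed


lemma kJN: assumes c: "c \<in> S"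
  shows "(\<Sum>j\<in>J. snd (sneg p (rr v)) j * fst c j) = (\<Sum>j\<in>N. snd (sneg p (rr v)) j * fst c j)"
proof (rule sum.mono_neutral_left[OF finN JsubN], rule ballI)
  fix j assume "j \<in> N - J"
  then show "snd (sneg p (rr v)) j * fst c j = 0" using c unfolding S_def by auto
qed

lemma AJ_eq:
  "AJ v = (\<lambda>x y. \<Sum>c\<in>S. (gam * al v c * om p (int (\<Sum>j\<in>N. snd (sneg p (rr v)) j * fst c j))) *
      pauliK p J (sadd p (sneg p (rr v)) c) x y)"
proof (rule ext, rule ext)
  fix x y
  have "AJ v x y = (\<Sum>c\<in>S. (gam * al v c) * mmul FJ (pauliK p J (sneg p (rr v))) (pauliK p J c) x y)"
    unfolding AJ_def PJ_def by (rule mmul_sum_right)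
  also have "\<dots> = (\<Sum>c\<in>S. (gam * al v c * om p (int (\<Sum>j\<in>N. snd (sneg p (rr v)) j * fst c j))) *
      pauliK p J (sadd p (sneg p (rr v)) c) x y)"
  proof (rule sum.cong[OF refl])
    fix c assume c: "c \<in> S"
    show "(gam * al v c) * mmul FJ (pauliK p J (sneg p (rr v))) (pauliK p J c) x y =
      (gam * al v c * om p (int (\<Sum>j\<in>N. snd (sneg p (rr v)) j * fst c j))) * pauliK p J (sadd p (sneg p (rr v)) c) x y"
      using pauli_mult[OF p0 finJ nr_J Ssub[THEN subsetD, OF c], where z=x and x=y] kJN[OF c] by simp
  qed
  finally show "AJ v x y = (\<Sum>c\<in>S. (gam * al v c * om p (int (\<Sum>j\<in>N. snd (sneg p (rr v)) j * fst c j))) *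
      pauliK p J (sadd p (sneg p (rr v)) c) x y)" .
qed

lemma LG_eq:
  "local_op p n J (AJ v) x y = (\<Sum>c\<in>S. (gam * al v c) * mmul F (pauliK p N (sneg p (rr v))) (pauliK p N c) x y)"
proof -
  have "local_op p n J (AJ v) x y = (\<Sum>c\<in>S. (gam * al v c * om p (int (\<Sum>j\<in>N. snd (sneg p (rr v)) j * fst c j))) *
      local_op p n J (pauliK p J (sadd p (sneg p (rr v)) c)) x y)"
    unfolding AJ_eq by (rule local_op_sum)
  also have "\<dots> = (\<Sum>c\<in>S. (gam * al v c) * mmul F (pauliK p N (sneg p (rr v))) (pauliK p N c) x y)"
  proof (rule sum.cong[OF refl])
    fix c assume c: "c \<in> S"
    have cJ: "c \<in> svecs p J" using c Ssub by blast
    have cN: "c \<in> svecs p N" using cJ svecs_mono[OF JsubN] by blast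
    have "local_op p n J (pauliK p J (sadd p (sneg p (rr v)) c)) = pauliK p N (sadd p (sneg p (rr v)) c)"
      by (rule local_pauli[OF sadd_svecs[OF nr_J cJ p0]])
    then show "(gam * al v c * om p (int (\<Sum>j\<in>N. snd (sneg p (rr v)) j * fst c j))) *
      local_op p n J (pauliK p J (sadd p (sneg p (rr v)) c)) x y =
      (gam * al v c) * mmul F (pauliK p N (sneg p (rr v))) (pauliK p N c) x y"
      using pauli_mult[OF p0 finN nr_N cN, where z=x and x=y] by simp
  qed
  finally show ?thesis .
qed

lemma LG_mvec:
  "mvec F (local_op p n J (AJ v)) w z =
     (\<Sum>c\<in>S. (gam * al v c) * mvec F (pauliK p N (sneg p (rr v))) (mvec F (pauliK p N c) w) z)"
proof -
  have "local_op p n J (AJ v) = (\<lambda>x y. \<Sum>c\<in>S. (gam * al v c) * mmul F (pauliK p N (sneg p (rr v))) (pauliK p N c) x y)"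
    using LG_eq by (simp add: fun_eq_iff)
  then have "mvec F (local_op p n J (AJ v)) w z =
      (\<Sum>c\<in>S. (gam * al v c) * mvec F (mmul F (pauliK p N (sneg p (rr v))) (pauliK p N c)) w z)"
    by (simp only: mvec_sum)
  then show ?thesis by (simp only: mvec_mmul)
qed

lemma char_S:
  "(\<Sum>c\<in>S. om p (bf N e c - bf N v c)) = (if cnd v e then of_nat (card S) else 0)"
proof -
  have "(\<Sum>c\<in>S. om p (bf N e c - bf N v c)) =
    (if \<forall>c\<in>S. int p dvd (bf N e c - bf N v c) then of_nat (card S) else 0)"
  proof (rule char_sum[OF p0 finS Ssub Sadd])
    show "\<forall>u\<in>S. \<forall>w\<in>S. [bf N e (sadd p u w) - bf N v (sadd p u w) = bf N e u - bf N v u + (bf N e w - bf N v w)] (mod int p)"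
    proof (intro ballI)
      fix u w
      have "[bf N e (sadd p u w) - bf N v (sadd p u w) = (bf N e u + bf N e w) - (bf N v u + bf N v w)] (mod int p)"
        by (intro cong_diff bf_add_right)
      then show "[bf N e (sadd p u w) - bf N v (sadd p u w) = bf N e u - bf N v u + (bf N e w - bf N v w)] (mod int p)"
        by (simp add: algebra_simps)
    qed
  qed
  then show ?thesis unfolding cnd_def .
qed

lemma rec_vec:
  assumes unit: "\<forall>c\<in>C. cnj (lmb c) * lmb c = 1" and phi: "phi \<in> stab_code p n C lam" and e: "e \<in> svecs p I"
  shows "\<exists>th. (\<forall>z\<in>F. mvec F (local_op p n J (AJ v)) (mvec F (pauliK p N e) phi) z = th * phi z) \<and>
     cnj th * th = (if cnd v e then cnj gam * gam * of_nat (card S) * of_nat (card S) else 0)"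
proof -
  let ?W = "mvec F (pauliK p N e) phi"
  let ?nr = "sneg p (rr v)"
  have eN: "e \<in> svecs p N" using e svecs_mono[OF IsubJ] svecs_mono[OF JsubN] by blast
  have 1: "mvec F (local_op p n J (AJ v)) ?W z = (gam * (if cnd v e then of_nat (card S) else 0)) * mvec F (pauliK p N ?nr) ?W z"
    if z: "z \<in> F" for z
  proof -
    have "mvec F (local_op p n J (AJ v)) ?W z = (\<Sum>c\<in>S. (gam * al v c) * (om p (bf N e c) * lmb c * mvec F (pauliK p N ?nr) ?W z))"
    proof -
      have "mvec F (pauliK p N ?nr) (mvec F (pauliK p N c) ?W) z = om p (bf N e c) * lmb c * mvec F (pauliK p N ?nr) ?W z"
        if c: "c \<in> S" for c
      proof -
        have cC: "c \<in> C" using c SsubC by blast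
        have "mvec F (pauliK p N ?nr) (mvec F (pauliK p N c) ?W) z = mvec F (pauliK p N ?nr) (\<lambda>x. om p (bf N e c) * lmb c * ?W x) z"
          by (rule arg_cong[where f="\<lambda>w. w z"], rule mvec_cong, rule comm[OF phi cC eN])
        then show ?thesis by (simp only: mvec_scal_vec)
      qed
      then show ?thesis unfolding LG_mvec by (intro sum.cong refl) simp
    qed
    also have "\<dots> = (gam * (\<Sum>c\<in>S. om p (bf N e c - bf N v c))) * mvec F (pauliK p N ?nr) ?W z"
    proof -
      have t: "(gam * al v c) * (om p (bf N e c) * lmb c * X) = gam * om p (bf N e c - bf N v c) * X" if c: "c \<in> S" for c X
      proof -
        have "cnj (lmb c) * lmb c = 1" using unit c SsubC by blast
        then have "al v c * om p (bf N e c) * lmb c = om p (bf N e c - bf N v c)"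
          unfolding al_def by (simp add: om_add[symmetric] mult_ac)
        then show ?thesis by (simp add: mult_ac)
      qed
      have "(\<Sum>c\<in>S. (gam * al v c) * (om p (bf N e c) * lmb c * mvec F (pauliK p N ?nr) ?W z)) =
          (\<Sum>c\<in>S. gam * om p (bf N e c - bf N v c) * mvec F (pauliK p N ?nr) ?W z)"
        by (rule sum.cong[OF refl], rule t)
      also have "\<dots> = (gam * (\<Sum>c\<in>S. om p (bf N e c - bf N v c))) * mvec F (pauliK p N ?nr) ?W z"
        by (simp only: sum_distrib_right[symmetric] sum_distrib_left[symmetric])
      finally show ?thesis .
    qed
    finally show ?thesis by (simp only: char_S)
  qed
  show ?thesis
  proof (cases "cnd v e")
    case False
    then show ?thesis using 1 by (intro exI[of _ 0]) simp
  next
    case True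
    have r: "rr v \<in> svecs p I" by (rule rr_svecs)
    have rc: "cnd v (rr v)" by (rule rr_cnd[OF True e])
    let ?f = "sadd p ?nr e"
    have fI: "?f \<in> svecs p I" by (rule sadd_svecs[OF sneg_svecs[OF r] e p0])
    have orth: "\<forall>c\<in>S. int p dvd bf N ?f c"
    proof
      fix c assume c: "c \<in> S"
      have A: "[bf N ?f c = bf N ?nr c + bf N e c] (mod int p)" by (rule bf_add_left)
      have B: "[bf N ?nr c = - bf N (rr v) c] (mod int p)" by (rule bf_sneg_left[OF r])
      have "[bf N ?nr c + bf N e c = - bf N (rr v) c + bf N e c] (mod int p)" by (rule cong_add[OF B cong_refl])
      then have "[bf N ?f c = - bf N (rr v) c + bf N e c] (mod int p)" by (rule cong_trans[OF A])
      moreover have "int p dvd (- bf N (rr v) c + bf N e c)"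
      proof -
        have "int p dvd (bf N e c - bf N v c)" using True c unfolding cnd_def by blast
        moreover have "int p dvd (bf N (rr v) c - bf N v c)" using rc c unfolding cnd_def by blast
        ultimately have "int p dvd ((bf N e c - bf N v c) - (bf N (rr v) c - bf N v c))" by (rule dvd_diff)
        then show ?thesis by (simp add: algebra_simps)
      qed
      ultimately show "int p dvd bf N ?f c" unfolding cong_def dvd_eq_mod_eq_0 by simp
    qed
    have fC: "?f \<in> C" by (rule key[OF fI orth])
    have fN: "?f \<in> svecs p N" using fC Csub by blast
    let ?k = "int (\<Sum>j\<in>N. snd ?nr j * fst e j)"
    let ?th = "gam * of_nat (card S) * (om p ?k * lmb ?f)"
    have "\<forall>z\<in>F. mvec F (local_op p n J (AJ v)) ?W z = ?th * phi z"
    proof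
      fix z assume z: "z \<in> F"
      have "mvec F (pauliK p N ?nr) ?W z = om p ?k * mvec F (pauliK p N ?f) phi z"
        by (rule prod_mvec[OF nr_N eN])
      also have "\<dots> = om p ?k * (lmb ?f * phi z)" using eig[OF phi fC z] by simp
      finally show "mvec F (local_op p n J (AJ v)) ?W z = ?th * phi z"
        using 1[OF z] True by (simp add: mult_ac)
    qed
    moreover have "cnj ?th * ?th = cnj gam * gam * of_nat (card S) * of_nat (card S)"
    proof -
      have L1: "cnj (lmb ?f) * lmb ?f = 1" using unit fC by blast
      have L2: "cnj (om p ?k) * om p ?k = 1" by (rule om_cnj_mult)
      have L3: "cnj ?th * ?th = (cnj gam * gam) * (of_nat (card S) * of_nat (card S)) *
          ((cnj (om p ?k) * om p ?k) * (cnj (lmb ?f) * lmb ?f))"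
        by (simp only: complex_cnj_mult complex_cnj_of_nat mult_ac)
      show ?thesis unfolding L3 L1 L2 by (simp only: mult_1_right mult.assoc)
    qed
    ultimately show ?thesis using True by (intro exI[of _ ?th]) simp
  qed
qed

end

context LR begin

lemma count:
  "(\<Sum>v\<in>svecs p J. (if cnd v e then 1 else 0 :: complex)) * of_nat (card S) = of_nat (card (svecs p J))"
proof -
  have "(\<Sum>v\<in>svecs p J. (if cnd v e then 1 else 0 :: complex)) * of_nat (card S) =
      (\<Sum>v\<in>svecs p J. (if cnd v e then of_nat (card S) else 0))"
    unfolding sum_distrib_right by (rule sum.cong[OF refl]) simp
  also have "\<dots> = (\<Sum>v\<in>svecs p J. \<Sum>c\<in>S. om p (bf N e c - bf N v c))"
    by (simp only: char_S)
  also have "\<dots> = (\<Sum>c\<in>S. \<Sum>v\<in>svecs p J. om p (bf N e c - bf N v c))" by (rule sum.swap)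
  also have "\<dots> = (\<Sum>c\<in>S. om p (bf N e c) * (if zv = c then of_nat (card (svecs p J)) else 0))"
  proof (rule sum.cong[OF refl])
    fix c assume c: "c \<in> S"
    have "(\<Sum>v\<in>svecs p J. om p (bf N e c - bf N v c)) = (\<Sum>v\<in>svecs p J. om p (bf N e c) * om p (bf N v zv - bf N v c))"
      by (rule sum.cong[OF refl]) (simp add: om_add[symmetric])
    also have "\<dots> = om p (bf N e c) * (if zv = c then of_nat (card (svecs p J)) else 0)"
      by (simp only: sum_distrib_left[symmetric] ortho_v[OF zS c])
    finally show "(\<Sum>v\<in>svecs p J. om p (bf N e c - bf N v c)) = om p (bf N e c) * (if zv = c then of_nat (card (svecs p J)) else 0)" .
  qed
  also have "\<dots> = om p (bf N e zv) * (if zv = zv then of_nat (card (svecs p J)) else 0)"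
    by (rule sum_single[OF finS zS]) auto
  also have "\<dots> = of_nat (card (svecs p J))" by simp
  finally show ?thesis .
qed

lemma akg:
  "apply_local_kraus p n J As (gammaI p n I (ketbra phi)) x y =
   (\<Sum>k<length As. (1 / of_nat p ^ (2 * card I)) *
      (\<Sum>e\<in>svecs p I. ketbra (mvec F (local_op p n J (As ! k)) (mvec F (pauliK p N e) phi)) x y))"
proof -
  have g: "gammaI p n I (ketbra phi) = (\<lambda>x y. (1 / of_nat p ^ (2 * card I)) *
      (\<Sum>e\<in>svecs p I. ketbra (mvec F (pauliK p N e) phi) x y))"
    unfolding gammaI_def pauli_eq ketbra_sandwich ..
  show ?thesis unfolding apply_local_kraus_def g sandwich_lin ketbra_sandwich ..
qed

lemma main_nt:
  assumes unit: "\<forall>c\<in>C. cnj (lmb c) * lmb c = 1" and vs: "distinct vs" "set vs = svecs p J"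
    and phi: "phi \<in> stab_code p n C lam" and x: "x \<in> F" and y: "y \<in> F"
  shows "apply_local_kraus p n J (map AJ vs) (gammaI p n I (ketbra phi)) x y = ketbra phi x y"
proof -
  let ?g0 = "1 / of_nat p ^ (2 * card I) :: complex"
  let ?kap = "cnj gam * gam * of_nat (card S) * of_nat (card S)"
  let ?K = "ketbra phi x y"
  have kb: "ketbra (mvec F (local_op p n J (AJ v)) (mvec F (pauliK p N e) phi)) x y =
      (if cnd v e then ?kap else 0) * ?K" if e: "e \<in> svecs p I" for v e
  proof -
    obtain th where th: "\<forall>z\<in>F. mvec F (local_op p n J (AJ v)) (mvec F (pauliK p N e) phi) z = th * phi z"
      and n: "cnj th * th = (if cnd v e then ?kap else 0)"
      using rec_vec[OF unit phi e, of v] by blast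
    have "ketbra (mvec F (local_op p n J (AJ v)) (mvec F (pauliK p N e) phi)) x y = (th * phi x) * cnj (th * phi y)"
      unfolding ketbra_def using th x y by simp
    also have "\<dots> = (cnj th * th) * ?K" unfolding ketbra_def by (simp add: mult_ac)
    finally show ?thesis unfolding n .
  qed
  have "apply_local_kraus p n J (map AJ vs) (gammaI p n I (ketbra phi)) x y =
      (\<Sum>v\<in>svecs p J. ?g0 * (\<Sum>e\<in>svecs p I. ketbra (mvec F (local_op p n J (AJ v)) (mvec F (pauliK p N e) phi)) x y))"
    unfolding akg using list_sum_set[OF vs(1), where A=AJ and g="\<lambda>A. ?g0 * (\<Sum>e\<in>svecs p I. ketbra (mvec F (local_op p n J A) (mvec F (pauliK p N e) phi)) x y)"]
    unfolding vs(2) .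
  also have "\<dots> = (\<Sum>v\<in>svecs p J. ?g0 * (\<Sum>e\<in>svecs p I. (if cnd v e then ?kap else 0) * ?K))"
    by (intro sum.cong refl arg_cong[where f="\<lambda>t. ?g0 * t"]) (simp only: kb)
  also have "\<dots> = (\<Sum>v\<in>svecs p J. \<Sum>e\<in>svecs p I. (?g0 * ?kap * ?K) * (if cnd v e then 1 else 0))"
  proof (rule sum.cong[OF refl])
    fix v
    have "?g0 * (\<Sum>e\<in>svecs p I. (if cnd v e then ?kap else 0) * ?K) = (\<Sum>e\<in>svecs p I. ?g0 * ((if cnd v e then ?kap else 0) * ?K))"
      by (rule sum_distrib_left)
    also have "\<dots> = (\<Sum>e\<in>svecs p I. (?g0 * ?kap * ?K) * (if cnd v e then 1 else 0))"
      by (rule sum.cong[OF refl]) (simp only: mult_ac mult_1_right mult_1_left mult_zero_right if_distrib[of "\<lambda>t. _ * t"] if_distrib[of "\<lambda>t. t * _"] mult_zero_left)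
    finally show "?g0 * (\<Sum>e\<in>svecs p I. (if cnd v e then ?kap else 0) * ?K) = (\<Sum>e\<in>svecs p I. (?g0 * ?kap * ?K) * (if cnd v e then 1 else 0))" .
  qed
  also have "\<dots> = (?g0 * ?kap * ?K) * (\<Sum>e\<in>svecs p I. \<Sum>v\<in>svecs p J. (if cnd v e then 1 else 0))"
    by (simp only: sum_distrib_left[symmetric] sum.swap[of _ "svecs p J" "svecs p I"])
  also have "\<dots> = ?K"
  proof -
    let ?T = "(\<Sum>e\<in>svecs p I. \<Sum>v\<in>svecs p J. (if cnd v e then 1 else 0 :: complex))"
    have T: "?T * of_nat (card S) = of_nat (card (svecs p I)) * of_nat (card (svecs p J))"
    proof -
      have "?T * of_nat (card S) = (\<Sum>e\<in>svecs p I. (\<Sum>v\<in>svecs p J. (if cnd v e then 1 else 0 :: complex)) * of_nat (card S))"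
        by (rule sum_distrib_right)
      also have "\<dots> = (\<Sum>e\<in>svecs p I. of_nat (card (svecs p J)))" by (rule sum.cong[OF refl], rule count)
      finally show ?thesis by simp
    qed
    have cI: "of_nat (card (svecs p I)) = (of_nat p ^ (2 * card I) :: complex)"
      using card_svecs[OF finI] by simp
    have pn: "(of_nat p ^ (2 * card I) :: complex) \<noteq> 0" using p0 by simp
    have "?g0 * ?kap * ?T = ?g0 * (cnj gam * gam * of_nat (card S)) * (?T * of_nat (card S))"
      by (simp only: mult_ac)
    also have "\<dots> = ?g0 * of_nat (card (svecs p I)) * (cnj gam * gam * of_nat (card S) * of_nat (card (svecs p J)))"
      unfolding T by (simp only: mult_ac)
    also have "\<dots> = 1" unfolding gam_sq cI using pn by simp
    finally have "?g0 * ?kap * ?T = 1" .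
    moreover have "(?g0 * ?kap * ?K) * ?T = (?g0 * ?kap * ?T) * ?K" by (simp only: mult_ac)
    ultimately show ?thesis by (simp only: mult_1_left)
  qed
  finally show ?thesis .
qed


lemma main_tr:
  assumes z: "\<forall>phi\<in>stab_code p n C lam. \<forall>x\<in>F. phi x = 0"
    and phi: "phi \<in> stab_code p n C lam" and x: "x \<in> F" and y: "y \<in> F"
  shows "apply_local_kraus p n J As (gammaI p n I (ketbra phi)) x y = ketbra phi x y"
proof -
  have W: "mvec F (pauliK p N e) phi = (\<lambda>_. 0)" for e
    unfolding mvec_def using z phi by (intro ext sum.neutral) auto
  have px: "phi x = 0" using z phi x by blast
  show ?thesis unfolding akg W by (simp add: mvec_def ketbra_def px)
qed

lemma TP_tr: "kraus_TP p J [ident FJ]"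
  unfolding kraus_TP_def mat_eq_def
proof (intro ballI)
  fix x y assume x: "x \<in> FJ" and y: "y \<in> FJ"
  have "mmul FJ (madj (ident FJ)) (ident FJ) x y = (\<Sum>z\<in>FJ. cnj (ident FJ z x) * ident FJ z y)"
    unfolding mmul_def madj_def ..
  also have "\<dots> = cnj (ident FJ x x) * ident FJ x y"
    by (rule sum_single[OF finFJ x]) (simp add: ident_def)
  also have "\<dots> = ident FJ x y" using x by (simp add: ident_def)
  finally show "(\<Sum>k<length [ident FJ]. mmul FJ (madj ([ident FJ] ! k)) ([ident FJ] ! k) x y) = ident FJ x y"
    by simp
qed

lemma TP_nt:
  assumes unit: "\<forall>c\<in>C. cnj (lmb c) * lmb c = 1" and vs: "distinct vs" "set vs = svecs p J"
  shows "kraus_TP p J (map AJ vs)"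
  unfolding kraus_TP_def mat_eq_def
proof (intro ballI)
  fix x y assume x: "x \<in> FJ" and y: "y \<in> FJ"
  show "(\<Sum>k<length (map AJ vs). mmul FJ (madj (map AJ vs ! k)) (map AJ vs ! k) x y) = ident FJ x y"
    using list_sum_set[OF vs(1), where A=AJ and g="\<lambda>A. mmul FJ (madj A) A x y"] TP[OF unit x y]
    unfolding vs(2) by simp
qed

lemma result: "locally_recoverable p n I J (stab_code p n C lam)"
  unfolding locally_recoverable_def
proof (intro conjI)
  show "I \<noteq> {}" by (rule Ine)
  show "I \<subset> J" by (rule IJ)
  show "\<exists>As. kraus_TP p J As \<and> (\<forall>v\<in>stab_code p n C lam. mat_eq F
      (apply_local_kraus p n J As (gammaI p n I (ketbra v))) (ketbra v))"
  proof (cases "\<exists>phi\<in>stab_code p n C lam. \<exists>x\<in>F. phi x \<noteq> 0")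
    case True
    then obtain phi0 x0 where phi0: "phi0 \<in> stab_code p n C lam" and x0: "x0 \<in> F" and nz: "phi0 x0 \<noteq> 0"
      by blast
    have unit: "\<forall>c\<in>C. cnj (lmb c) * lmb c = 1" using lmb_norm[OF phi0 x0 nz] by blast
    obtain vs where vs: "set vs = svecs p J" "distinct vs"
      using finite_distinct_list[OF finite_svecs[OF finJ]] by blast
    show ?thesis
    proof (intro exI conjI ballI)
      show "kraus_TP p J (map AJ vs)" by (rule TP_nt[OF unit vs(2) vs(1)])
      fix v assume v: "v \<in> stab_code p n C lam"
      show "mat_eq F (apply_local_kraus p n J (map AJ vs) (gammaI p n I (ketbra v))) (ketbra v)"
        unfolding mat_eq_def using main_nt[OF unit vs(2) vs(1) v] by blast
    qed
  next
    case False
    then have z: "\<forall>phi\<in>stab_code p n C lam. \<forall>x\<in>F. phi x = 0" by blast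
    show ?thesis
    proof (intro exI conjI ballI)
      show "kraus_TP p J [ident FJ]" by (rule TP_tr)
      fix v assume v: "v \<in> stab_code p n C lam"
      show "mat_eq F (apply_local_kraus p n J [ident FJ] (gammaI p n I (ketbra v))) (ketbra v)"
        unfolding mat_eq_def using main_tr[OF z v] by blast
    qed
  qed
qed

end

theorem proposition13:
  fixes p n :: nat and C :: "svec set" and I J :: "nat set"
    and lam :: "cmat \<Rightarrow> complex"
  assumes "prime p"
    and "symp_self_orth p n C"
    and "is_character p n C lam"
    and "I \<noteq> {}" and "I \<subset> J" and "J \<subset> {1..n}"
    and "shorten I (puncture J (sdual p n C)) = shorten I C"
  shows "locally_recoverable p n I J (stab_code p n C lam)"
proof -
  interpret LR p n C I J lam using assms by unfold_locales
  show ?thesis by (rule result)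
qed

end
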